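(* The map $X\mapsto \mathfrak p^{-1}(X)\cap\Phi^+$ is a bijection from the set of admissible subsets of $\Psi^+$ (type $\mathrm{F}_4$) onto the set of $\sigma$-invariant admissible subsets of $\Phi^+$ (type $\mathrm{E}_6$). Under the action of $W(\mathrm{F}_4)$, the admissible subsets of $\Psi^+$ fall into exactly six orbits, with representatives (I) $\emptyset$; (II) $\{\epsilon_4-\epsilon_3\}$; (III) $\{\tfrac12(\epsilon_1-\epsilon_2-\epsilon_3-\epsilon_4)\}$; (IV) $\{\epsilon_3-\epsilon_2,\epsilon_3+\epsilon_2\}$; (V) $\{\tfrac12(\epsilon_1-\epsilon_2-\epsilon_3-\epsilon_4),\ \epsilon_3-\epsilon_2,\ \epsilon_4+\epsilon_1\}$; (VI) $\{\epsilon_3-\epsilon_2,\epsilon_3+\epsilon_2,\epsilon_4+\epsilon_1,\epsilon_4-\epsilon_1\}$, and these orbits have cardinalities $1,12,12,18,36,3$ respectively.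
   Context: Let $\epsilon_1,\dots,\epsilon_4$ be the standard orthonormal basis of $\mathbb R^4$, and $\beta_1=\frac12(\epsilon_1-\epsilon_2-\epsilon_3-\epsilon_4)$, $\beta_2=\epsilon_2$, $\beta_3=\epsilon_3-\epsilon_2$, $\beta_4=\epsilon_4-\epsilon_3$. Let $\Psi=\{\pm\epsilon_i\}\cup\{\pm\epsilon_i\pm\epsilon_j: i<j\}\cup\{\frac12(\pm\epsilon_1\pm\epsilon_2\pm\epsilon_3\pm\epsilon_4)\}$, the root system of type $\mathrm{F}_4$ with simple roots $\beta_1,\dots,\beta_4$, and $\Psi^+$ the $24$ roots that are nonnegative combinations of the $\beta_i$. A root $\beta$ and $-\beta$ are identified when writing sets of positive roots (e.g. $\epsilon_4-\epsilon_1$ stands for the positive root $\epsilon_1-\epsilon_4$). $W(\mathrm{F}_4)$ is the reflection group of $\Psi$; it acts on $\Psi^+$ by $w\cdot\beta=$ the element of $\{wβ,-w\beta\}\cap\Psi^+$, and on subsets of $\Psi^+$ elementwise. Let $\Phi$ be the root system of type $\mathrm{E}_6$ in a $6$-dimensional Euclidean space $V$ with simple roots $\alpha_1,\dots,\alpha_6$ (all of squared length $2$), where $(\alpha_i,\alpha_j)=-1$ if $\{i,j\}$ is one of $\{1,3\},\{3,4\},\{4,5\},\{5,6\},\{2,4\}$ and $0$ for other $i\neq j$; $\Phi^+$ is its set of positive roots. A subset $B\subseteq\Phi^+$ is admissible if its elements are mutually orthogonal and whenever $\gamma_1,\gamma_2,\gamma_3\in B$ are distinct and $\gamma\in\Phi$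 satisfies $(\gamma,\gamma_k)\in\{\pm1\}$ for $k=1,2,3$, the positive root among $\pm\bigl(2\gamma-\sum_{k=1}^3(\gamma,\gamma_k)\gamma_k\bigr)$ lies in $B$. Let $\sigma$ be the linear isometry of $V$ with $\sigma(\alpha_1)=\alpha_6$, $\sigma(\alpha_6)=\alpha_1$, $\sigma(\alpha_3)=\alpha_5$, $\sigma(\alpha_5)=\alpha_3$, $\sigma(\alpha_2)=\alpha_2$, $\sigma(\alpha_4)=\alpha_4$. Let $\mathfrak p:V\to\mathbb R^4$ be the linear map with $\mathfrak p(\alpha_1)=\mathfrak p(\alpha_6)=\beta_1$, $\mathfrak p(\alpha_3)=\mathfrak p(\alpha_5)=\beta_2$, $\mathfrak p(\alpha_4)=\beta_3$, $\mathfrak p(\alpha_2)=\beta_4$. A set $X\subseteq\Psi^+$ of mutually orthogonal roots is called admissible (type $\mathrm{F}_4$) if $\mathfrak p^{-1}(X)\cap\Phi^+$ is an admissible subset of $\Phi^+$. *)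

theory Defs
  imports Complex_Main
begin

text \<open>For R^4 the coordinates
  1..4 are the coefficients w.r.t. eps_1..eps_4; for the E6 space V the
  coordinates 1..6 are the coefficients w.r.t. the simple roots alpha_1..alpha_6
  (V is identified with R^6 via this basis, with the inner product given by the
  Gram matrix of the alpha_i).  All vectors occurring are zero outside these
  index ranges.\<close>

type_synonym vec = "nat \<Rightarrow> real"

definition vadd :: "vec \<Rightarrow> vec \<Rightarrow> vec" where "vadd u v = (\<lambda>k. u k + v k)"
definition vsub :: "vec \<Rightarrow> vec \<Rightarrow> vec" where "vsub u v = (\<lambda>k. u k - v k)"
definition vneg :: "vec \<Rightarrow> vec" where "vneg v = (\<lambda>k. - v k)"
definition vsc :: "real \<Rightarrow> vec \<Rightarrow> vec" where "vsc a v = (\<lambda>k. a * v k)"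

definition eps :: "nat \<Rightarrow> vec" where "eps i = (\<lambda>k. if k = i then 1 else 0)"

definition ip4 :: "vec \<Rightarrow> vec \<Rightarrow> real" where "ip4 u v = (\<Sum>k\<in>{1..4}. u k * v k)"

definition beta1 :: vec where
  "beta1 = vsc (1/2) (vsub (vsub (vsub (eps 1) (eps 2)) (eps 3)) (eps 4))"
definition beta2 :: vec where "beta2 = eps 2"
definition beta3 :: vec where "beta3 = vsub (eps 3) (eps 2)"
definition beta4 :: vec where "beta4 = vsub (eps 4) (eps 3)"

definition Psi :: "vec set" where
  "Psi = {vsc s (eps i) | s i. s \<in> {1, -1} \<and> i \<in> {1..4}}
       \<union> {vadd (vsc s (eps i)) (vsc t (eps j)) | s t i j.
              s \<in> {1, -1} \<and> t \<in> {1, -1} \<and> 1 \<le> i \<and> i < j \<and> j \<le> 4}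
       \<union> {(\<lambda>k. if k \<in> {1..4} then s k / 2 else 0) | s :: nat \<Rightarrow> real.
              \<forall>k\<in>{1..4}. s k \<in> {1, -1}}"

definition PsiPlus :: "vec set" where
  "PsiPlus = {r \<in> Psi. \<exists>a b c d. a \<ge> 0 \<and> b \<ge> 0 \<and> c \<ge> 0 \<and> d \<ge> 0 \<and>
      r = vadd (vsc a beta1) (vadd (vsc b beta2) (vadd (vsc c beta3) (vsc d beta4)))}"

text \<open>The positive representative of +-v (identification of beta with -beta).\<close>
definition posF :: "vec \<Rightarrow> vec" where
  "posF v = (if v \<in> PsiPlus then v else vneg v)"

definition refl4 :: "vec \<Rightarrow> vec \<Rightarrow> vec" where
  "refl4 r v = vsub v (vsc (2 * ip4 v r / ip4 r r) r)"

text \<open>The Weyl group W(F4): the group generated by the reflections in the roots of Psi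
  (reflections are involutions, so the generated monoid is the generated group).\<close>
inductive_set WF4 :: "(vec \<Rightarrow> vec) set" where
  WF4_id: "id \<in> WF4"
| WF4_refl: "w \<in> WF4 \<Longrightarrow> r \<in> Psi \<Longrightarrow> refl4 r \<circ> w \<in> WF4"

definition actF :: "(vec \<Rightarrow> vec) \<Rightarrow> vec \<Rightarrow> vec" where
  "actF w b = posF (w b)"

definition actFset :: "(vec \<Rightarrow> vec) \<Rightarrow> vec set \<Rightarrow> vec set" where
  "actFset w X = actF w ` X"

definition orbitF :: "vec set \<Rightarrow> vec set set" where
  "orbitF X = {actFset w X | w. w \<in> WF4}"

definition alphaE :: "nat \<Rightarrow> vec" where "alphaE i = (\<lambda>k. if k = i then 1 else 0)"

definition cartanE :: "nat \<Rightarrow> nat \<Rightarrow> real" where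
  "cartanE i j = (if i = j then 2
     else if {i, j} \<in> {{1,3}, {3,4}, {4,5}, {5,6}, {2,4}} then -1 else 0)"

definition ipE :: "vec \<Rightarrow> vec \<Rightarrow> real" where
  "ipE u v = (\<Sum>i\<in>{1..6}. \<Sum>j\<in>{1..6}. u i * v j * cartanE i j)"

definition reflE :: "vec \<Rightarrow> vec \<Rightarrow> vec" where
  "reflE a v = vsub v (vsc (2 * ipE v a / ipE a a) a)"

inductive_set PhiE :: "vec set" where
  PhiE_simple: "i \<in> {1..6} \<Longrightarrow> alphaE i \<in> PhiE"
| PhiE_refl: "v \<in> PhiE \<Longrightarrow> i \<in> {1..6} \<Longrightarrow> reflE (alphaE i) v \<in> PhiE"

definition PhiPlus :: "vec set" where
  "PhiPlus = {v \<in> PhiE. \<forall>i. v i \<ge> 0}"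

definition admE :: "vec set \<Rightarrow> bool" where
  "admE B \<longleftrightarrow> B \<subseteq> PhiPlus
     \<and> (\<forall>g1\<in>B. \<forall>g2\<in>B. g1 \<noteq> g2 \<longrightarrow> ipE g1 g2 = 0)
     \<and> (\<forall>g1 g2 g3 g. g1 \<in> B \<and> g2 \<in> B \<and> g3 \<in> B \<and> g1 \<noteq> g2 \<and> g1 \<noteq> g3 \<and> g2 \<noteq> g3
          \<and> g \<in> PhiE \<and> ipE g g1 \<in> {1, -1} \<and> ipE g g2 \<in> {1, -1} \<and> ipE g g3 \<in> {1, -1}
          \<longrightarrow> (let v = vsub (vsc 2 g)
                       (vadd (vsc (ipE g g1) g1) (vadd (vsc (ipE g g2) g2) (vsc (ipE g g3) g3)))
               in (if v \<in> PhiPlus then v else vneg v) \<in> B))"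

definition sperm :: "nat \<Rightarrow> nat" where
  "sperm k = (if k = 1 then 6 else if k = 6 then 1 else if k = 3 then 5
              else if k = 5 then 3 else k)"

text \<open>sigma in coordinates: sigma(alpha_i) = alpha_(sperm i).\<close>
definition sigmaE :: "vec \<Rightarrow> vec" where
  "sigmaE v = (\<lambda>k. v (sperm k))"

definition pE :: "vec \<Rightarrow> vec" where
  "pE v = vadd (vsc (v 1 + v 6) beta1)
           (vadd (vsc (v 3 + v 5) beta2) (vadd (vsc (v 4) beta3) (vsc (v 2) beta4)))"

definition preimE :: "vec set \<Rightarrow> vec set" where
  "preimE X = {v \<in> PhiPlus. pE v \<in> X}"

definition admF :: "vec set \<Rightarrow> bool" where
  "admF X \<longleftrightarrow> X \<subseteq> PsiPlus \<and> (\<forall>x\<in>X. \<forall>y\<in>X. x \<noteq> y \<longrightarrow> ip4 x y = 0)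
              \<and> admE (preimE X)"

definition reprI :: "vec set" where "reprI = {}"
definition reprII :: "vec set" where "reprII = {posF (vsub (eps 4) (eps 3))}"
definition reprIII :: "vec set" where
  "reprIII = {posF (vsc (1/2) (vsub (vsub (vsub (eps 1) (eps 2)) (eps 3)) (eps 4)))}"
definition reprIV :: "vec set" where
  "reprIV = {posF (vsub (eps 3) (eps 2)), posF (vadd (eps 3) (eps 2))}"
definition reprV :: "vec set" where
  "reprV = {posF (vsc (1/2) (vsub (vsub (vsub (eps 1) (eps 2)) (eps 3)) (eps 4))),
            posF (vsub (eps 3) (eps 2)), posF (vadd (eps 4) (eps 1))}"
definition reprVI :: "vec set" where
  "reprVI = {posF (vsub (eps 3) (eps 2)), posF (vadd (eps 3) (eps 2)),
             posF (vadd (eps 4) (eps 1)), posF (vsub (eps 4) (eps 1))}"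

end

theory Submission
  imports Defs
begin


type_synonym v4 = "int \<times> int \<times> int \<times> int"
type_synonym v6 = "int \<times> int \<times> int \<times> int \<times> int \<times> int"

fun ipi :: "v4 \<Rightarrow> v4 \<Rightarrow> int" where "ipi (a,b,c,d) (a',b',c',d') = a*a'+b*b'+c*c'+d*d'"
fun sci :: "int \<Rightarrow> v4 \<Rightarrow> v4" where "sci k (a,b,c,d) = (k*a,k*b,k*c,k*d)"
fun sbi :: "v4 \<Rightarrow> v4 \<Rightarrow> v4" where "sbi (a,b,c,d) (a',b',c',d') = (a-a',b-b',c-c',d-d')"
definition rfi :: "v4 \<Rightarrow> v4 \<Rightarrow> v4" where "rfi r v = sbi v (sci (2 * ipi v r div ipi r r) r)"
fun crit :: "v4 \<Rightarrow> bool" where "crit (a,b,c,d) = (0 \<le> a \<and> 0 \<le> a + d \<and> 0 \<le> 2*a+c+d \<and> 0 \<le> 3*a+b+c+d)"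

fun ipEi :: "v6 \<Rightarrow> v6 \<Rightarrow> int" where
  "ipEi (a1,a2,a3,a4,a5,a6) (b1,b2,b3,b4,b5,b6) =
     2*(a1*b1+a2*b2+a3*b3+a4*b4+a5*b5+a6*b6)
     - (a1*b3+a3*b1) - (a3*b4+a4*b3) - (a4*b5+a5*b4) - (a5*b6+a6*b5) - (a2*b4+a4*b2)"
fun scE :: "int \<Rightarrow> v6 \<Rightarrow> v6" where "scE k (a1,a2,a3,a4,a5,a6) = (k*a1,k*a2,k*a3,k*a4,k*a5,k*a6)"
fun sbE :: "v6 \<Rightarrow> v6 \<Rightarrow> v6" where
  "sbE (a1,a2,a3,a4,a5,a6) (b1,b2,b3,b4,b5,b6) = (a1-b1,a2-b2,a3-b3,a4-b4,a5-b5,a6-b6)"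
fun unitE :: "nat \<Rightarrow> v6" where
  "unitE i = (if i = 1 then (1,0,0,0,0,0) else if i = 2 then (0,1,0,0,0,0) else if i = 3 then (0,0,1,0,0,0)
    else if i = 4 then (0,0,0,1,0,0) else if i = 5 then (0,0,0,0,1,0) else (0,0,0,0,0,1))"
definition rfE :: "nat \<Rightarrow> v6 \<Rightarrow> v6" where "rfE i v = sbE v (scE (ipEi v (unitE i)) (unitE i))"
fun sigi :: "v6 \<Rightarrow> v6" where "sigi (a1,a2,a3,a4,a5,a6) = (a6,a2,a5,a4,a3,a1)"
fun pEi :: "v6 \<Rightarrow> v4" where
  "pEi (a1,a2,a3,a4,a5,a6) = (a1+a6, -(a1+a6) + 2*(a3+a5) - 2*a4, -(a1+a6) + 2*a4 - 2*a2, -(a1+a6) + 2*a2)"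
fun nonneg6 :: "v6 \<Rightarrow> bool" where
  "nonneg6 (a1,a2,a3,a4,a5,a6) = (0\<le>a1 \<and> 0\<le>a2 \<and> 0\<le>a3 \<and> 0\<le>a4 \<and> 0\<le>a5 \<and> 0\<le>a6)"

definition psiP :: "v4 list" where "psiP = [(0,-2,0,2), (0,-2,2,0), (0,0,-2,2), (0,0,0,2), (0,0,2,0), (0,0,2,2), (0,2,0,0), (0,2,0,2), (0,2,2,0), (1,-1,-1,-1), (1,-1,-1,1), (1,-1,1,-1), (1,-1,1,1), (1,1,-1,-1), (1,1,-1,1), (1,1,1,-1), (1,1,1,1), (2,-2,0,0), (2,0,-2,0), (2,0,0,-2), (2,0,0,0), (2,0,0,2), (2,0,2,0), (2,2,0,0)]"

definition phiP :: "v6 list" where "phiP = [(0,0,0,0,0,1), (0,0,0,0,1,0), (0,0,0,0,1,1), (0,0,0,1,0,0), (0,0,0,1,1,0), (0,0,0,1,1,1), (0,0,1,0,0,0), (0,0,1,1,0,0), (0,0,1,1,1,0), (0,0,1,1,1,1), (0,1,0,0,0,0), (0,1,0,1,0,0), (0,1,0,1,1,0), (0,1,0,1,1,1), (0,1,1,1,0,0), (0,1,1,1,1,0), (0,1,1,1,1,1), (0,1,1,2,1,0), (0,1,1,2,1,1), (0,1,1,2,2,1), (1,0,0,0,0,0), (1,0,1,0,0,0), (1,0,1,1,0,0), (1,0,1,1,1,0), (1,0,1,1,1,1), (1,1,1,1,0,0), (1,1,1,1,1,0), (1,1,1,1,1,1), (1,1,1,2,1,0), (1,1,1,2,1,1),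 (1,1,1,2,2,1), (1,1,2,2,1,0), (1,1,2,2,1,1), (1,1,2,2,2,1), (1,1,2,3,2,1), (1,2,2,3,2,1)]"

definition chainE :: "(v6 \<times> nat \<times> v6) list" where "chainE = [((-1,0,0,0,0,0),1,(1,0,0,0,0,0)), ((1,0,1,0,0,0),3,(1,0,0,0,0,0)), ((0,-1,0,0,0,0),2,(0,1,0,0,0,0)), ((0,1,0,1,0,0),4,(0,1,0,0,0,0)), ((0,0,-1,0,0,0),3,(0,0,1,0,0,0)), ((0,0,1,1,0,0),4,(0,0,1,0,0,0)), ((0,0,0,-1,0,0),4,(0,0,0,1,0,0)), ((0,0,0,1,1,0),5,(0,0,0,1,0,0)), ((0,0,0,0,-1,0),5,(0,0,0,0,1,0)), ((0,0,0,0,1,1),6,(0,0,0,0,1,0)), ((0,0,0,0,0,-1),6,(0,0,0,0,0,1)), ((-1,0,-1,0,0,0),3,(-1,0,0,0,0,0)), ((1,0,1,1,0,0),4,(1,0,1,0,0,0)), ((0,-1,0,-1,0,0),4,(0,-1,0,0,0,0)), ((0,1,1,1,0,0),3,(0,1,0,1,0,0)), ((0,1,0,1,1,0),5,(0,1,0,1,0,0)), ((0,0,-1,-1,0,0),4,(0,0,-1,0,0,0)), ((0,0,1,1,1,0),5,(0,0,1,1,0,0)), ((0,0,0,-1,-1,0),5,(0,0,0,-1,0,0)), ((0,0,0,1,1,1),6,(0,0,0,1,1,0)), ((0,0,0,0,-1,-1),6,(0,0,0,0,-1,0)), ((-1,0,-1,-1,0,0),4,(-1,0,-1,0,0,0)),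 ((1,1,1,1,0,0),2,(1,0,1,1,0,0)), ((1,0,1,1,1,0),5,(1,0,1,1,0,0)), ((0,-1,-1,-1,0,0),3,(0,-1,0,-1,0,0)), ((0,-1,0,-1,-1,0),5,(0,-1,0,-1,0,0)), ((0,1,1,1,1,0),5,(0,1,1,1,0,0)), ((0,1,0,1,1,1),6,(0,1,0,1,1,0)), ((0,0,-1,-1,-1,0),5,(0,0,-1,-1,0,0)), ((0,0,1,1,1,1),6,(0,0,1,1,1,0)), ((0,0,0,-1,-1,-1),6,(0,0,0,-1,-1,0)), ((-1,-1,-1,-1,0,0),2,(-1,0,-1,-1,0,0)), ((-1,0,-1,-1,-1,0),5,(-1,0,-1,-1,0,0)), ((1,1,1,1,1,0),5,(1,1,1,1,0,0)), ((1,0,1,1,1,1),6,(1,0,1,1,1,0)), ((0,-1,-1,-1,-1,0),5,(0,-1,-1,-1,0,0)), ((0,-1,0,-1,-1,-1),6,(0,-1,0,-1,-1,0)), ((0,1,1,2,1,0),4,(0,1,1,1,1,0)), ((0,1,1,1,1,1),6,(0,1,1,1,1,0)), ((0,0,-1,-1,-1,-1),6,(0,0,-1,-1,-1,0)), ((-1,-1,-1,-1,-1,0),5,(-1,-1,-1,-1,0,0)), ((-1,0,-1,-1,-1,-1),6,(-1,0,-1,-1,-1,0)), ((1,1,1,2,1,0),4,(1,1,1,1,1,0)), ((1,1,1,1,1,1),6,(1,1,1,1,1,0)), ((0,-1,-1,-2,-1,0),4,(0,-1,-1,-1,-1,0)), ((0,-1,-1,-1,-1,-1),6,(0,-1,-1,-1,-1,0)),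 ((0,1,1,2,1,1),6,(0,1,1,2,1,0)), ((-1,-1,-1,-2,-1,0),4,(-1,-1,-1,-1,-1,0)), ((-1,-1,-1,-1,-1,-1),6,(-1,-1,-1,-1,-1,0)), ((1,1,2,2,1,0),3,(1,1,1,2,1,0)), ((1,1,1,2,1,1),6,(1,1,1,2,1,0)), ((0,-1,-1,-2,-1,-1),6,(0,-1,-1,-2,-1,0)), ((0,1,1,2,2,1),5,(0,1,1,2,1,1)), ((-1,-1,-2,-2,-1,0),3,(-1,-1,-1,-2,-1,0)), ((-1,-1,-1,-2,-1,-1),6,(-1,-1,-1,-2,-1,0)), ((1,1,2,2,1,1),6,(1,1,2,2,1,0)), ((1,1,1,2,2,1),5,(1,1,1,2,1,1)), ((0,-1,-1,-2,-2,-1),5,(0,-1,-1,-2,-1,-1)), ((-1,-1,-2,-2,-1,-1),6,(-1,-1,-2,-2,-1,0)), ((-1,-1,-1,-2,-2,-1),5,(-1,-1,-1,-2,-1,-1)), ((1,1,2,2,2,1),5,(1,1,2,2,1,1)), ((-1,-1,-2,-2,-2,-1),5,(-1,-1,-2,-2,-1,-1)), ((1,1,2,3,2,1),4,(1,1,2,2,2,1)), ((-1,-1,-2,-3,-2,-1),4,(-1,-1,-2,-2,-2,-1)), ((1,2,2,3,2,1),2,(1,1,2,3,2,1)), ((-1,-2,-2,-3,-2,-1),2,(-1,-1,-2,-3,-2,-1))]"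

definition repI :: "v4 list" where "repI = []"

definition chI :: "(v4 list \<times> v4 \<times> v4 list) list" where "chI = []"

definition repII :: "v4 list" where "repII = [(0,0,-2,2)]"

definition chII :: "(v4 list \<times> v4 \<times> v4 list) list" where "chII = [([(0,-2,2,0)],(0,-2,0,2),[(0,0,-2,2)]), ([(0,-2,0,2)],(0,-2,2,0),[(0,0,-2,2)]), ([(0,0,2,2)],(0,0,0,2),[(0,0,-2,2)]), ([(0,2,2,0)],(0,2,0,2),[(0,0,-2,2)]), ([(0,2,0,2)],(0,2,2,0),[(0,0,-2,2)]), ([(2,-2,0,0)],(1,-1,-1,1),[(0,0,-2,2)]), ([(2,2,0,0)],(1,1,-1,1),[(0,0,-2,2)]), ([(2,0,0,-2)],(2,0,-2,0),[(0,0,-2,2)]), ([(2,0,-2,0)],(2,0,0,-2),[(0,0,-2,2)]), ([(2,0,2,0)],(2,0,0,2),[(0,0,-2,2)]), ([(2,0,0,2)],(2,0,2,0),[(0,0,-2,2)])]"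

definition repIII :: "v4 list" where "repIII = [(1,-1,-1,-1)]"

definition chIII :: "(v4 list \<times> v4 \<times> v4 list) list" where "chIII = [([(1,-1,-1,1)],(0,0,0,2),[(1,-1,-1,-1)]), ([(1,-1,1,-1)],(0,0,2,0),[(1,-1,-1,-1)]), ([(1,-1,1,1)],(0,0,2,2),[(1,-1,-1,-1)]), ([(1,1,-1,-1)],(0,2,0,0),[(1,-1,-1,-1)]), ([(1,1,-1,1)],(0,2,0,2),[(1,-1,-1,-1)]), ([(1,1,1,-1)],(0,2,2,0),[(1,-1,-1,-1)]), ([(0,0,0,2)],(1,-1,-1,1),[(1,-1,-1,-1)]), ([(0,0,2,0)],(1,-1,1,-1),[(1,-1,-1,-1)]), ([(0,2,0,0)],(1,1,-1,-1),[(1,-1,-1,-1)]), ([(2,0,0,0)],(1,1,1,1),[(1,-1,-1,-1)]), ([(1,1,1,1)],(2,0,0,0),[(1,-1,-1,-1)])]"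

definition repIV :: "v4 list" where "repIV = [(0,-2,2,0), (0,2,2,0)]"

definition chIV :: "(v4 list \<times> v4 \<times> v4 list) list" where "chIV = [([(0,0,-2,2), (0,0,2,2)],(0,-2,0,2),[(0,-2,2,0), (0,2,2,0)]), ([(0,-2,0,2), (0,2,0,2)],(0,0,-2,2),[(0,-2,2,0), (0,2,2,0)]), ([(0,-2,2,0), (2,0,0,-2)],(1,-1,-1,-1),[(0,-2,2,0), (0,2,2,0)]), ([(0,-2,2,0), (2,0,0,2)],(1,-1,-1,1),[(0,-2,2,0), (0,2,2,0)]), ([(2,0,0,-2), (0,2,2,0)],(1,-1,1,-1),[(0,-2,2,0), (0,2,2,0)]), ([(2,0,0,2), (0,2,2,0)],(1,-1,1,1),[(0,-2,2,0), (0,2,2,0)]), ([(2,0,-2,0), (2,0,2,0)],(2,-2,0,0),[(0,-2,2,0), (0,2,2,0)]), ([(2,-2,0,0), (2,2,0,0)],(2,0,-2,0),[(0,-2,2,0), (0,2,2,0)]), ([(0,0,-2,2), (2,-2,0,0)],(1,-1,-1,-1),[(0,0,-2,2), (0,0,2,2)]), ([(2,-2,0,0), (0,0,2,2)],(1,-1,-1,1),[(0,0,-2,2), (0,0,2,2)]), ([(0,0,-2,2), (2,2,0,0)],(1,1,-1,-1),[(0,0,-2,2), (0,0,2,2)]), ([(2,2,0,0), (0,0,2,2)],(1,1,-1,1),[(0,0,-2,2), (0,0,2,2)]), ([(2,0,0,-2), (2,0,0,2)],(2,0,-2,0),[(0,0,-2,2), (0,0,2,2)]), ([(0,-2,0,2),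 (2,0,-2,0)],(1,-1,-1,-1),[(0,-2,0,2), (0,2,0,2)]), ([(2,0,-2,0), (0,2,0,2)],(1,-1,-1,1),[(0,-2,0,2), (0,2,0,2)]), ([(0,-2,0,2), (2,0,2,0)],(1,-1,1,-1),[(0,-2,0,2), (0,2,0,2)]), ([(2,0,2,0), (0,2,0,2)],(1,-1,1,1),[(0,-2,0,2), (0,2,0,2)])]"

definition repV :: "v4 list" where "repV = [(1,-1,-1,-1), (0,-2,2,0), (2,0,0,2)]"

definition chV :: "(v4 list \<times> v4 \<times> v4 list) list" where "chV = [([(1,-1,-1,-1), (0,0,-2,2), (2,2,0,0)],(0,-2,0,2),[(1,-1,-1,-1), (0,-2,2,0), (2,0,0,2)]), ([(1,-1,-1,-1), (0,-2,0,2), (2,0,2,0)],(0,0,-2,2),[(1,-1,-1,-1), (0,-2,2,0), (2,0,0,2)]), ([(1,-1,-1,1), (0,-2,2,0), (2,0,0,-2)],(0,0,0,2),[(1,-1,-1,-1), (0,-2,2,0), (2,0,0,2)]), ([(1,-1,1,-1), (0,2,2,0), (2,0,0,2)],(0,0,2,0),[(1,-1,-1,-1), (0,-2,2,0), (2,0,0,2)]), ([(1,-1,1,1), (0,2,0,2), (2,0,-2,0)],(0,0,2,2),[(1,-1,-1,-1), (0,-2,2,0), (2,0,0,2)]), ([(1,1,-1,-1), (0,2,2,0), (2,0,0,2)],(0,2,0,0),[(1,-1,-1,-1), (0,-2,2,0), (2,0,0,2)]), ([(1,1,-1,1), (0,0,2,2), (2,-2,0,0)],(0,2,0,2),[(1,-1,-1,-1),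 (0,-2,2,0), (2,0,0,2)]), ([(1,1,1,-1), (0,-2,2,0), (2,0,0,2)],(0,2,2,0),[(1,-1,-1,-1), (0,-2,2,0), (2,0,0,2)]), ([(0,0,0,2), (0,-2,2,0), (0,2,2,0)],(1,-1,-1,1),[(1,-1,-1,-1), (0,-2,2,0), (2,0,0,2)]), ([(0,0,2,0), (2,0,0,-2), (2,0,0,2)],(1,-1,1,-1),[(1,-1,-1,-1), (0,-2,2,0), (2,0,0,2)]), ([(0,2,0,0), (2,0,0,-2), (2,0,0,2)],(1,1,-1,-1),[(1,-1,-1,-1), (0,-2,2,0), (2,0,0,2)]), ([(2,0,0,0), (0,-2,2,0), (0,2,2,0)],(1,1,1,1),[(1,-1,-1,-1), (0,-2,2,0), (2,0,0,2)]), ([(1,1,1,1), (0,-2,2,0), (2,0,0,-2)],(2,0,0,0),[(1,-1,-1,-1), (0,-2,2,0), (2,0,0,2)]), ([(1,-1,-1,1), (0,0,2,2), (2,2,0,0)],(0,0,0,2),[(1,-1,-1,-1), (0,0,-2,2), (2,2,0,0)]), ([(1,-1,1,-1), (0,0,2,2), (2,2,0,0)],(0,0,2,0),[(1,-1,-1,-1), (0,0,-2,2), (2,2,0,0)]), ([(1,-1,1,1), (0,0,-2,2), (2,2,0,0)],(0,0,2,2),[(1,-1,-1,-1), (0,0,-2,2), (2,2,0,0)]), ([(1,1,-1,-1), (0,0,-2,2), (2,-2,0,0)],(0,2,0,0),[(1,-1,-1,-1), (0,0,-2,2), (2,2,0,0)]), ([(1,1,-1,1), (0,2,2,0), (2,0,0,-2)],(0,2,0,2),[(1,-1,-1,-1),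 (0,0,-2,2), (2,2,0,0)]), ([(1,1,1,-1), (0,2,0,2), (2,0,-2,0)],(0,2,2,0),[(1,-1,-1,-1), (0,0,-2,2), (2,2,0,0)]), ([(0,0,0,2), (2,-2,0,0), (2,2,0,0)],(1,-1,-1,1),[(1,-1,-1,-1), (0,0,-2,2), (2,2,0,0)]), ([(0,0,2,0), (2,-2,0,0), (2,2,0,0)],(1,-1,1,-1),[(1,-1,-1,-1), (0,0,-2,2), (2,2,0,0)]), ([(0,2,0,0), (0,0,-2,2), (0,0,2,2)],(1,1,-1,-1),[(1,-1,-1,-1), (0,0,-2,2), (2,2,0,0)]), ([(2,0,0,0), (0,0,-2,2), (0,0,2,2)],(1,1,1,1),[(1,-1,-1,-1), (0,0,-2,2), (2,2,0,0)]), ([(1,1,1,1), (0,0,-2,2), (2,-2,0,0)],(2,0,0,0),[(1,-1,-1,-1), (0,0,-2,2), (2,2,0,0)]), ([(1,-1,-1,1), (0,2,0,2), (2,0,2,0)],(0,0,0,2),[(1,-1,-1,-1), (0,-2,0,2), (2,0,2,0)]), ([(1,-1,1,-1), (0,-2,0,2), (2,0,-2,0)],(0,0,2,0),[(1,-1,-1,-1), (0,-2,0,2), (2,0,2,0)]), ([(1,-1,1,1), (0,2,2,0), (2,0,0,-2)],(0,0,2,2),[(1,-1,-1,-1), (0,-2,0,2), (2,0,2,0)]), ([(1,1,-1,-1), (0,2,0,2), (2,0,2,0)],(0,2,0,0),[(1,-1,-1,-1), (0,-2,0,2), (2,0,2,0)]), ([(1,1,-1,1), (0,-2,0,2), (2,0,2,0)],(0,2,0,2),[(1,-1,-1,-1),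 (0,-2,0,2), (2,0,2,0)]), ([(1,1,1,-1), (0,0,2,2), (2,-2,0,0)],(0,2,2,0),[(1,-1,-1,-1), (0,-2,0,2), (2,0,2,0)]), ([(0,0,0,2), (2,0,-2,0), (2,0,2,0)],(1,-1,-1,1),[(1,-1,-1,-1), (0,-2,0,2), (2,0,2,0)]), ([(0,0,2,0), (0,-2,0,2), (0,2,0,2)],(1,-1,1,-1),[(1,-1,-1,-1), (0,-2,0,2), (2,0,2,0)]), ([(0,2,0,0), (2,0,-2,0), (2,0,2,0)],(1,1,-1,-1),[(1,-1,-1,-1), (0,-2,0,2), (2,0,2,0)]), ([(2,0,0,0), (0,-2,0,2), (0,2,0,2)],(1,1,1,1),[(1,-1,-1,-1), (0,-2,0,2), (2,0,2,0)]), ([(1,1,1,1), (0,-2,0,2), (2,0,-2,0)],(2,0,0,0),[(1,-1,-1,-1), (0,-2,0,2), (2,0,2,0)])]"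

definition repVI :: "v4 list" where "repVI = [(0,-2,2,0), (0,2,2,0), (2,0,0,2), (2,0,0,-2)]"

definition chVI :: "(v4 list \<times> v4 \<times> v4 list) list" where "chVI = [([(0,0,-2,2), (0,0,2,2), (2,2,0,0), (2,-2,0,0)],(0,-2,0,2),[(0,-2,2,0), (0,2,2,0), (2,0,0,2), (2,0,0,-2)]), ([(0,-2,0,2), (0,2,0,2), (2,0,2,0), (2,0,-2,0)],(0,0,-2,2),[(0,-2,2,0), (0,2,2,0), (2,0,0,2), (2,0,0,-2)])]"

definition wits :: "(v6 \<times> v6 \<times> v6 \<times> v6) option list" where "wits = [None, None, None, None, None, None, None, None, None, None, None, None, Some ((0,1,1,2,2,1),(1,0,1,1,1,1),(1,1,2,2,1,0),(-1,-1,-2,-3,-2,-1)), Some ((1,1,1,1,1,1),(0,1,1,2,2,1),(1,1,2,2,1,0),(-1,-2,-2,-3,-2,-1)), Some ((0,1,1,2,2,1),(1,1,1,2,1,1),(1,1,2,2,1,0),(-1,-2,-2,-3,-2,-1)), None, Some ((0,0,1,1,1,1),(1,2,2,3,2,1),(1,0,1,1,1,0),(-1,-1,-2,-3,-2,-1)), Some ((1,1,1,1,1,1),(0,0,1,1,1,1),(1,0,1,1,1,0),(-1,-1,-2,-2,-2,-1)), Some ((1,1,1,2,1,1),(0,0,1,1,1,1),(1,0,1,1,1,0),(-1,-1,-2,-3,-2,-1)), None, Some ((0,1,1,1,1,1),(1,1,1,1,1,0),(1,1,2,3,2,1),(-1,-2,-2,-3,-2,-1)), Some ((1,0,1,1,1,1),(0,1,1,1,1,1),(1,1,1,1,1,0),(-1,-1,-2,-2,-2,-1)),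 Some ((1,1,1,2,1,1),(0,1,1,1,1,1),(1,1,1,1,1,0),(-1,-2,-2,-3,-2,-1)), Some ((0,0,1,1,1,1),(0,1,1,1,1,1),(1,0,1,1,1,0),(-1,-1,-1,-2,-1,0)), Some ((0,0,1,1,1,1),(1,1,1,1,1,0),(1,1,1,2,1,1),(-1,-1,-1,-2,-1,0)), None, Some ((1,0,1,0,0,0),(0,0,0,0,1,1),(1,1,2,3,2,1),(-1,-1,-2,-2,-2,-1)), Some ((1,0,1,0,0,0),(1,2,2,3,2,1),(0,0,0,0,1,1),(-1,-1,-2,-2,-2,-1)), Some ((1,0,1,0,0,0),(1,1,1,2,1,1),(0,0,0,0,1,1),(-1,-1,-1,-1,-1,-1)), Some ((1,0,1,0,0,0),(0,1,1,2,2,1),(0,0,0,0,1,1),(-1,-1,-1,-1,0,0)), Some ((0,0,0,0,1,1),(1,1,1,2,1,1),(1,1,2,2,1,0),(-1,-1,-1,-2,-1,0)), None, Some ((1,1,1,2,1,0),(1,1,2,2,2,1),(0,1,1,2,1,1),(-1,-2,-2,-3,-2,-1)), Some ((1,1,1,2,1,0),(1,0,1,1,1,1),(0,1,1,2,1,1),(-1,-1,-2,-3,-2,-1)), Some ((1,1,1,2,1,0),(1,1,1,1,1,1),(0,1,1,2,1,1),(-1,-2,-2,-3,-2,-1)), Some ((1,1,1,2,1,0),(0,0,1,1,1,1),(1,0,1,1,1,0),(-1,-1,-1,-1,-1,0)), Some ((0,0,1,1,1,1),(0,1,1,2,1,1),(1,1,1,2,1,0),(-1,-1,-1,-1,-1,0)),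 Some ((1,1,1,2,1,0),(0,1,1,1,1,1),(0,1,1,2,1,1),(-1,0,-1,-1,-1,0)), Some ((0,1,1,2,1,1),(1,1,1,1,1,0),(1,1,1,2,1,0),(-1,0,-1,-1,-1,0)), Some ((0,0,1,1,1,1),(0,1,1,2,1,1),(1,1,1,1,1,0),(-1,0,0,0,0,0)), None, Some ((0,0,0,1,1,1),(1,1,2,2,2,1),(1,0,1,1,0,0),(-1,-1,-2,-3,-2,-1)), Some ((0,0,0,1,1,1),(1,2,2,3,2,1),(1,0,1,1,0,0),(-1,-1,-2,-3,-2,-1)), Some ((1,1,1,1,1,1),(0,0,0,1,1,1),(1,0,1,1,0,0),(-1,-1,-1,-2,-1,-1)), Some ((0,0,0,1,1,1),(0,1,1,2,2,1),(1,0,1,1,0,0),(-1,-1,-1,-1,0,0)), Some ((1,0,1,1,0,0),(1,1,2,2,1,0),(0,0,0,1,1,1),(-1,-1,-1,-1,0,0)), Some ((1,0,1,0,0,0),(0,0,0,1,1,1),(1,0,1,1,0,0),(-1,-1,-2,-2,-1,0)), Some ((0,0,0,0,1,1),(1,2,2,3,2,1),(1,0,1,1,0,0),(-1,-1,-2,-2,-1,0)), Some ((0,0,0,0,1,1),(1,0,1,1,0,0),(1,1,2,2,1,0),(-1,-1,-1,-2,-1,0)), None, Some ((1,1,1,1,0,0),(1,1,2,2,2,1),(0,1,0,1,1,1),(-1,-2,-2,-3,-2,-1)), Some ((1,1,1,1,0,0),(0,1,0,1,1,1),(1,1,2,3,2,1),(-1,-2,-2,-3,-2,-1)), Some ((1,1,1,1,0,0),(1,0,1,1,1,1),(0,1,0,1,1,1),(-1,-1,-1,-2,-1,-1)),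 Some ((0,1,1,2,2,1),(1,1,1,1,0,0),(0,1,0,1,1,1),(-1,0,-1,-1,0,0)), Some ((1,1,2,2,1,0),(1,1,1,1,0,0),(1,0,1,1,1,1),(-1,-1,-2,-2,-1,-1)), Some ((1,0,1,0,0,0),(1,1,1,1,0,0),(0,1,0,1,1,1),(-1,-1,-2,-2,-1,0)), Some ((0,0,0,0,1,1),(1,1,1,1,0,0),(1,0,1,0,0,0),(-1,-1,-2,-2,-1,0)), Some ((0,0,0,0,1,1),(1,1,2,2,1,0),(1,1,1,1,0,0),(-1,-1,-1,-2,-1,0)), Some ((0,0,0,1,1,1),(1,1,1,1,0,0),(0,1,0,1,1,1),(-1,-1,-2,-2,-1,0)), Some ((1,0,1,1,0,0),(0,0,0,1,1,1),(1,1,1,1,0,0),(-1,-1,-2,-2,-1,0)), Some ((1,0,1,1,0,0),(1,1,2,2,1,0),(0,0,0,1,1,1),(-1,-1,-1,-1,0,0)), Some ((0,0,0,0,1,1),(1,0,1,1,0,0),(0,0,0,1,1,1),(-1,-1,-2,-2,-1,0)), Some ((0,0,0,0,1,1),(1,0,1,1,0,0),(1,1,2,2,1,0),(-1,-1,-1,-2,-1,0)), None, Some ((1,0,0,0,0,0),(1,1,2,2,2,1),(0,0,0,0,0,1),(-1,-1,-1,-1,-1,-1)), Some ((1,0,0,0,0,0),(0,0,0,0,0,1),(1,1,2,3,2,1),(-1,-1,-1,-2,-1,-1)), Some ((1,0,0,0,0,0),(1,2,2,3,2,1),(0,0,0,0,0,1),(-1,-1,-1,-2,-1,-1)), Some ((0,0,1,1,1,1),(1,0,0,0,0,0),(1,0,1,1,1,0),(-1,-1,-1,-2,-1,0)),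 Some ((0,0,1,1,1,1),(1,2,2,3,2,1),(1,0,0,0,0,0),(-1,-1,-1,-2,-1,0)), Some ((1,0,0,0,0,0),(0,1,1,1,1,1),(0,0,0,0,0,1),(-1,-1,-1,-2,-1,0)), Some ((1,1,1,1,1,0),(1,0,0,0,0,0),(0,1,1,1,1,1),(-1,-1,-1,-2,-1,0)), Some ((0,0,1,1,1,1),(1,1,1,1,1,0),(1,0,0,0,0,0),(-1,-1,-1,-2,-1,0)), Some ((1,1,1,2,1,0),(1,0,0,0,0,0),(0,1,1,2,1,1),(-1,-1,-1,-1,-1,0)), Some ((0,1,1,2,1,1),(1,0,0,0,0,0),(1,1,1,2,1,0),(-1,-1,-1,-1,-1,0)), Some ((0,0,1,1,1,1),(0,1,1,2,1,1),(1,0,0,0,0,0),(-1,-1,-1,-1,-1,0)), Some ((0,1,1,2,1,1),(1,1,1,1,1,0),(1,0,0,0,0,0),(-1,0,-1,-1,-1,0)), Some ((0,0,1,1,1,1),(0,1,1,2,1,1),(1,1,1,1,1,0),(-1,0,0,0,0,0)), None, None, Some ((0,0,1,1,1,0),(1,1,1,2,2,1),(1,1,2,2,1,1),(-1,-1,-2,-3,-2,-1)), None, Some ((0,0,1,1,1,0),(1,0,1,1,1,1),(1,2,2,3,2,1),(-1,-1,-2,-3,-2,-1)), Some ((0,0,1,1,1,0),(0,1,1,1,1,1),(1,1,1,1,1,0),(-1,-1,-2,-2,-2,-1)), None, Some ((0,0,1,1,1,0),(1,0,1,0,0,0),(0,0,0,0,1,1),(-1,-1,-2,-2,-2,-1)),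 None, Some ((1,1,1,2,1,0),(0,0,1,1,1,0),(0,1,1,2,1,1),(-1,-1,-2,-3,-2,-1)), None, Some ((0,1,1,2,1,1),(1,1,1,1,1,0),(0,0,1,1,1,0),(-1,0,-1,-1,-1,0)), Some ((0,1,1,2,1,1),(1,1,1,1,1,0),(0,0,1,1,1,0),(-1,0,-1,-1,-1,0)), Some ((0,0,1,1,1,0),(0,0,0,1,1,1),(1,0,1,1,0,0),(-1,-1,-2,-3,-2,-1)), None, Some ((0,0,0,0,1,1),(1,0,1,1,0,0),(0,0,1,1,1,0),(-1,-1,-2,-2,-1,0)), Some ((0,0,0,0,1,1),(1,2,2,3,2,1),(1,0,1,1,0,0),(-1,-1,-2,-2,-1,0)), None, None, Some ((1,1,2,2,1,1),(0,1,1,1,1,0),(1,1,1,2,2,1),(-1,-2,-2,-3,-2,-1)), None, Some ((1,1,1,1,1,1),(0,1,1,1,1,0),(1,1,2,3,2,1),(-1,-2,-2,-3,-2,-1)), Some ((0,0,1,1,1,1),(0,1,1,1,1,0),(1,0,1,1,1,0),(-1,-1,-2,-2,-2,-1)), None, Some ((1,0,1,0,0,0),(0,1,1,1,1,0),(0,0,0,0,1,1),(-1,-1,-2,-2,-2,-1)), None, Some ((1,1,1,2,1,0),(0,1,1,1,1,0),(0,1,1,2,1,1),(-1,-2,-2,-3,-2,-1)), None, Some ((0,0,1,1,1,1),(0,1,1,1,1,0),(0,1,1,2,1,1),(-1,-1,-1,-1,-1,0)), Some ((0,0,1,1,1,1),(0,1,1,1,1,0),(0,1,1,2,1,1),(-1,-1,-1,-1,-1,0)),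 Some ((1,1,1,1,0,0),(0,1,1,1,1,0),(0,1,0,1,1,1),(-1,-2,-2,-3,-2,-1)), None, Some ((0,0,0,0,1,1),(0,1,1,1,1,0),(1,1,1,1,0,0),(-1,-1,-2,-2,-1,0)), Some ((0,0,0,0,1,1),(0,1,1,1,1,0),(1,1,1,1,0,0),(-1,-1,-2,-2,-1,0)), None, Some ((0,0,1,0,0,0),(0,0,0,0,1,0),(1,1,2,3,2,1),(-1,-1,-2,-2,-2,-1)), Some ((0,0,1,0,0,0),(1,2,2,3,2,1),(0,0,0,0,1,0),(-1,-1,-2,-2,-2,-1)), Some ((1,1,2,2,1,1),(0,0,1,0,0,0),(1,1,1,2,2,1),(0,-1,-1,-1,0,0)), Some ((1,0,1,1,1,1),(0,0,1,0,0,0),(0,0,0,0,1,0),(-1,-1,-2,-2,-2,-1)), None, Some ((1,1,1,1,1,1),(0,0,1,0,0,0),(0,0,0,0,1,0),(-1,-1,-2,-2,-2,-1)), None, None, None, Some ((1,1,2,2,1,1),(0,1,1,2,1,0),(1,1,1,2,2,1),(-1,-2,-2,-3,-2,-1)), None, Some ((1,1,1,2,1,1),(0,1,1,2,1,0),(1,1,2,2,2,1),(-1,-2,-2,-3,-2,-1)), Some ((0,0,1,1,1,1),(0,1,1,2,1,0),(1,0,1,1,1,0),(-1,-1,-2,-3,-2,-1)), None, Some ((0,1,1,2,1,0),(0,1,1,1,1,1),(1,1,1,1,1,0),(-1,-2,-2,-3,-2,-1)), None, Some ((0,0,1,1,1,1),(1,1,1,1,1,0),(0,1,1,2,1,0),(-1,-1,-1,-2,-1,0)),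 Some ((0,0,1,1,1,1),(1,1,1,1,1,0),(1,1,1,2,1,1),(-1,-1,-1,-2,-1,0)), Some ((0,0,0,1,1,1),(0,1,1,2,1,0),(1,0,1,1,0,0),(-1,-1,-2,-3,-2,-1)), None, Some ((1,1,1,1,0,0),(0,1,1,2,1,0),(0,1,0,1,1,1),(-1,-2,-2,-3,-2,-1)), None, Some ((1,0,1,1,0,0),(0,0,0,1,1,1),(1,1,1,1,0,0),(-1,-1,-2,-2,-1,0)), Some ((1,0,1,1,0,0),(0,0,0,1,1,1),(1,1,1,1,0,0),(-1,-1,-2,-2,-1,0)), Some ((0,0,1,0,0,0),(0,1,1,2,1,0),(0,0,0,0,1,0),(0,-1,-1,-1,-1,0)), Some ((0,0,1,0,0,0),(1,1,2,2,1,1),(1,1,1,2,2,1),(0,-1,-1,-1,0,0)), None, Some ((1,1,2,2,2,1),(0,0,1,1,0,0),(0,0,0,1,1,0),(-1,-1,-2,-3,-2,-1)), Some ((1,2,2,3,2,1),(0,0,1,1,0,0),(0,0,0,1,1,0),(-1,-1,-2,-3,-2,-1)), Some ((1,1,2,2,1,1),(1,1,1,2,2,1),(0,0,1,1,0,0),(0,-1,-1,-1,0,0)), Some ((1,0,1,1,1,1),(0,0,1,1,0,0),(0,0,0,1,1,0),(-1,-1,-2,-3,-2,-1)), None, Some ((1,1,1,2,1,1),(0,0,1,1,0,0),(0,0,0,1,1,0),(-1,-1,-2,-3,-2,-1)), None, Some ((0,1,1,1,1,0),(0,0,1,1,0,0),(0,0,0,1,1,0),(0,-1,-1,-2,-1,0)),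 Some ((0,1,1,1,1,0),(0,0,1,1,0,0),(1,1,2,2,1,1),(-1,-1,-2,-2,-1,0)), Some ((0,0,1,0,0,0),(0,0,1,1,0,0),(0,0,0,0,1,0),(-1,-1,-2,-2,-1,-1)), Some ((0,0,1,0,0,0),(1,2,2,3,2,1),(0,0,1,1,0,0),(-1,-1,-2,-2,-1,-1)), Some ((0,0,1,0,0,0),(0,0,1,1,0,0),(1,1,2,2,1,1),(-1,-1,-2,-2,-1,0)), Some ((0,0,1,0,0,0),(0,0,1,1,0,0),(0,0,0,0,1,0),(-1,-1,-2,-2,-1,-1)), Some ((0,0,1,0,0,0),(1,2,2,3,2,1),(0,0,1,1,0,0),(-1,-1,-2,-2,-1,-1)), None, Some ((0,1,0,1,1,0),(1,1,2,2,2,1),(0,1,1,1,0,0),(-1,-2,-2,-3,-2,-1)), Some ((0,1,1,1,0,0),(0,1,0,1,1,0),(1,1,2,3,2,1),(-1,-2,-2,-3,-2,-1)), Some ((1,1,2,2,1,1),(0,1,0,1,1,0),(1,1,1,2,2,1),(0,0,-1,-1,0,0)), Some ((1,1,1,1,1,1),(0,1,0,1,1,0),(0,1,1,1,0,0),(-1,-2,-2,-3,-2,-1)), None, Some ((1,1,1,2,1,1),(0,1,0,1,1,0),(0,1,1,1,0,0),(-1,-2,-2,-3,-2,-1)), None, Some ((0,0,1,1,1,0),(0,1,0,1,1,0),(0,1,1,1,0,0),(0,-1,-1,-2,-1,0)), Some ((0,1,0,1,1,0),(0,0,1,1,1,0),(1,1,2,2,1,1),(0,0,-1,-1,-1,-1)),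 Some ((0,0,1,0,0,0),(0,1,0,1,1,0),(0,0,0,0,1,0),(-1,-1,-2,-2,-1,-1)), Some ((0,0,1,0,0,0),(0,1,0,1,1,0),(0,0,0,0,1,0),(-1,-1,-2,-2,-1,-1)), Some ((0,0,1,0,0,0),(0,1,0,1,1,0),(1,1,2,2,1,1),(-1,0,-1,0,0,0)), Some ((0,0,1,0,0,0),(0,1,0,1,1,0),(0,0,0,0,1,0),(-1,-1,-2,-2,-1,-1)), Some ((0,0,1,0,0,0),(0,1,0,1,1,0),(0,0,0,0,1,0),(-1,-1,-2,-2,-1,-1)), Some ((0,1,1,1,0,0),(0,1,0,1,1,0),(0,0,1,1,0,0),(-1,-1,-2,-2,-1,-1)), Some ((0,1,0,1,1,0),(0,0,1,1,0,0),(0,0,0,1,1,0),(-1,-1,-2,-2,-1,-1)), Some ((0,1,0,1,1,0),(0,0,1,1,0,0),(1,1,2,2,1,1),(-1,0,-1,-1,0,0)), Some ((0,1,0,1,1,0),(0,0,1,1,0,0),(1,1,1,2,1,1),(-1,-1,-2,-2,-1,-1)), Some ((0,1,0,1,1,0),(0,0,1,1,0,0),(1,1,1,2,1,1),(-1,-1,-2,-2,-1,-1)), Some ((0,0,1,0,0,0),(0,1,0,1,1,0),(0,0,1,1,0,0),(-1,-1,-2,-2,-1,-1)), Some ((0,0,1,0,0,0),(0,1,0,1,1,0),(0,0,1,1,0,0),(-1,-1,-2,-2,-1,-1)), None, None, Some ((1,1,2,2,1,1),(1,1,1,2,2,1),(0,1,0,0,0,0),(-1,-2,-2,-3,-2,-1)),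 None, Some ((1,1,1,2,1,1),(1,1,2,2,2,1),(0,1,0,0,0,0),(-1,-2,-2,-3,-2,-1)), Some ((0,1,1,2,2,1),(0,1,0,0,0,0),(1,1,2,2,1,0),(-1,-2,-2,-3,-2,-1)), None, Some ((1,0,1,0,0,0),(0,1,0,0,0,0),(0,0,0,0,1,1),(-1,-1,-1,-1,-1,-1)), None, Some ((0,0,0,0,1,1),(0,1,0,0,0,0),(1,1,2,2,1,0),(-1,-1,-1,-1,0,0)), Some ((0,0,0,0,1,1),(0,1,0,0,0,0),(1,1,2,2,1,0),(-1,-1,-1,-1,0,0)), Some ((1,1,1,2,1,0),(0,1,1,2,1,1),(0,1,0,0,0,0),(-1,-2,-2,-3,-2,-1)), None, Some ((0,1,0,0,0,0),(1,0,0,0,0,0),(0,0,0,0,0,1),(-1,-1,-1,-1,-1,-1)), None, Some ((0,1,1,2,1,1),(0,1,0,0,0,0),(1,0,0,0,0,0),(-1,-1,-1,-1,-1,0)), Some ((0,1,1,2,1,1),(0,1,0,0,0,0),(1,0,0,0,0,0),(-1,-1,-1,-1,-1,0)), Some ((0,0,1,0,0,0),(0,1,0,0,0,0),(0,0,0,0,1,0),(0,-1,-1,-1,-1,0)), Some ((0,0,1,0,0,0),(0,1,0,0,0,0),(1,1,2,2,1,1),(0,-1,-1,-1,-1,-1)), None, Some ((0,1,1,2,1,0),(1,1,2,2,2,1),(0,1,0,0,0,0),(-1,-2,-2,-3,-2,-1)), None, Some ((1,1,1,2,1,1),(0,1,1,2,1,0),(0,1,0,0,0,0),(-1,-2,-2,-3,-2,-1)),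 None, None, Some ((0,0,1,0,0,0),(0,1,0,0,0,0),(1,1,2,2,1,1),(0,-1,-1,-1,-1,-1)), None, None, Some ((1,1,2,2,1,1),(1,1,1,2,2,1),(0,0,0,1,0,0),(-1,-1,-2,-3,-2,-1)), None, Some ((1,0,1,1,1,1),(1,2,2,3,2,1),(0,0,0,1,0,0),(-1,-1,-2,-3,-2,-1)), Some ((0,1,1,2,2,1),(0,0,0,1,0,0),(1,1,2,2,1,0),(-1,-1,-2,-3,-2,-1)), None, Some ((0,0,1,1,1,1),(1,0,1,1,1,0),(0,0,0,1,0,0),(-1,-1,-2,-3,-2,-1)), None, Some ((1,1,1,1,0,0),(0,1,0,1,1,1),(0,0,0,1,0,0),(-1,-1,-1,-2,-1,-1)), None, Some ((0,0,0,1,0,0),(1,1,2,2,1,0),(1,1,1,1,0,0),(-1,-1,-1,-2,-1,0)), Some ((0,0,0,1,0,0),(1,1,2,2,1,0),(1,1,1,1,0,0),(-1,-1,-1,-2,-1,0)), Some ((1,0,0,0,0,0),(0,0,0,0,0,1),(0,0,0,1,0,0),(-1,-1,-1,-2,-1,-1)), None, Some ((0,0,1,1,1,1),(1,0,0,0,0,0),(0,0,0,1,0,0),(-1,-1,-1,-2,-1,0)), Some ((0,0,1,1,1,1),(1,2,2,3,2,1),(1,0,0,0,0,0),(-1,-1,-1,-2,-1,0)), None, Some ((0,0,1,1,1,0),(1,2,2,3,2,1),(0,0,0,1,0,0),(-1,-1,-2,-3,-2,-1)), None, Some ((0,0,1,1,1,0),(1,0,1,1,1,1),(0,0,0,1,0,0),(-1,-1,-2,-3,-2,-1)),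 None, Some ((0,1,0,1,1,0),(0,0,0,1,0,0),(0,1,1,1,0,0),(0,-1,-1,-2,-1,0)), Some ((0,1,0,1,1,0),(1,1,2,2,1,1),(1,1,1,2,2,1),(0,0,-1,-1,0,0)), None, Some ((0,1,0,1,1,0),(0,0,1,1,1,0),(1,1,2,2,1,1),(0,0,-1,-1,-1,-1)), None, None, Some ((1,1,2,2,1,1),(1,1,1,2,2,1),(0,1,0,1,0,0),(-1,-2,-2,-3,-2,-1)), None, Some ((1,1,1,1,1,1),(0,1,0,1,0,0),(1,1,2,3,2,1),(-1,-2,-2,-3,-2,-1)), Some ((0,1,0,1,0,0),(0,1,1,2,2,1),(1,1,2,2,1,0),(-1,-2,-2,-3,-2,-1)), None, Some ((0,1,1,1,1,1),(1,1,1,1,1,0),(0,1,0,1,0,0),(-1,-2,-2,-3,-2,-1)), None, Some ((0,0,0,1,1,1),(1,0,1,1,0,0),(0,1,0,1,0,0),(-1,-1,-1,-2,-1,-1)), None, Some ((1,0,1,1,0,0),(0,1,0,1,0,0),(1,1,2,2,1,0),(-1,-1,-1,-2,-1,0)), Some ((1,0,1,1,0,0),(0,1,0,1,0,0),(1,1,2,2,1,0),(-1,-1,-1,-2,-1,0)), Some ((1,0,0,0,0,0),(0,0,0,0,0,1),(0,1,0,1,0,0),(-1,-1,-1,-2,-1,-1)), None, Some ((1,1,1,1,1,0),(1,0,0,0,0,0),(0,1,0,1,0,0),(-1,-1,-1,-2,-1,0)), Some ((1,1,1,1,1,0),(1,0,0,0,0,0),(0,1,0,1,0,0),(-1,-1,-1,-2,-1,0)),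 None, Some ((0,1,0,1,0,0),(0,1,1,1,1,0),(1,1,2,3,2,1),(-1,-2,-2,-3,-2,-1)), None, Some ((1,1,1,1,1,1),(0,1,1,1,1,0),(0,1,0,1,0,0),(-1,-2,-2,-3,-2,-1)), None, Some ((0,1,0,1,0,0),(0,0,1,1,0,0),(0,0,0,1,1,0),(0,-1,-1,-2,-1,0)), Some ((0,0,1,1,0,0),(1,1,2,2,1,1),(1,1,1,2,2,1),(0,-1,-1,-1,0,0)), None, Some ((0,1,1,1,1,0),(0,0,1,1,0,0),(1,1,2,2,1,1),(-1,-1,-2,-2,-1,0))]"


definition psi :: "v4 list" where "psi = psiP @ map (sci (-1)) psiP"
definition phi :: "v6 list" where "phi = phiP @ map (scE (-1)) phiP"
definition posi :: "v4 \<Rightarrow> v4" where "posi v = (if v \<in> set psiP then v else sci (-1) v)"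
definition posE :: "v6 \<Rightarrow> v6" where "posE v = (if v \<in> set phiP then v else scE (-1) v)"

fun chainok :: "('i \<Rightarrow> bool) \<Rightarrow> ('i \<Rightarrow> 'a \<Rightarrow> 'a) \<Rightarrow> 'a list \<Rightarrow> ('a \<times> 'i \<times> 'a) list \<Rightarrow> bool" where
  "chainok A f K [] = True"
| "chainok A f K ((c,i,p) # L) = (p \<in> set K \<and> A i \<and> c = f i p \<and> chainok A f (c # K) L)"

fun osets :: "v4 list \<Rightarrow> v4 list list" where
  "osets [] = [[]]"
| "osets (x # xs) = osets xs @ map ((#) x) (osets (filter (\<lambda>y. ipi x y = 0) xs))"

definition vE :: "v6 \<Rightarrow> v6 \<Rightarrow> v6 \<Rightarrow> v6 \<Rightarrow> v6" where
  "vE g g1 g2 g3 = sbE (sbE (sbE (scE 2 g) (scE (ipEi g g1) g1)) (scE (ipEi g g2) g2)) (scE (ipEi g g3) g3)"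

definition Dg :: "v6 list \<Rightarrow> v6 \<Rightarrow> v6 list" where
  "Dg C g = filter (\<lambda>c. ipEi g c = 1 \<or> ipEi g c = -1) C"

definition admEi :: "v6 list \<Rightarrow> bool" where
  "admEi C \<longleftrightarrow> (\<forall>g\<in>set C. g \<in> set phiP) \<and> (\<forall>g1\<in>set C. \<forall>g2\<in>set C. g1 \<noteq> g2 \<longrightarrow> ipEi g1 g2 = 0)
     \<and> (\<forall>g\<in>set phi. \<forall>g1\<in>set (Dg C g). \<forall>g2\<in>set (Dg C g). \<forall>g3\<in>set (Dg C g).
          g1 \<noteq> g2 \<and> g1 \<noteq> g3 \<and> g2 \<noteq> g3 \<longrightarrow> posE (vE g g1 g2 g3) \<in> set C)"

definition badw :: "v6 list \<Rightarrow> v6 \<times> v6 \<times> v6 \<times> v6 \<Rightarrow> bool" where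
  "badw C w = (case w of (g1,g2,g3,g) \<Rightarrow> g1 \<in> set C \<and> g2 \<in> set C \<and> g3 \<in> set C \<and> g1 \<noteq> g2 \<and> g1 \<noteq> g3 \<and> g2 \<noteq> g3
       \<and> g \<in> set phi \<and> ipEi g g1 \<in> {1,-1} \<and> ipEi g g2 \<in> {1,-1} \<and> ipEi g g3 \<in> {1,-1}
       \<and> posE (vE g g1 g2 g3) \<notin> set C)"

definition preimi :: "v4 list \<Rightarrow> v6 list" where "preimi T = filter (\<lambda>v. pEi v \<in> set T) phiP"

definition shapei :: "v4 list \<Rightarrow> nat \<times> nat" where
  "shapei ys = (card (set (filter (\<lambda>v. ipi v v = 8) ys)), card (set (filter (\<lambda>v. ipi v v = 4) ys)))"

definition goods :: "(nat \<times> nat) list" where "goods = [(0,0),(1,0),(0,1),(2,0),(2,1),(4,0)]"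

definition cls :: "nat \<times> nat \<Rightarrow> v4 list list" where
  "cls s = (if s = (0,0) then repI # map fst chI else if s = (1,0) then repII # map fst chII
     else if s = (0,1) then repIII # map fst chIII else if s = (2,0) then repIV # map fst chIV
     else if s = (2,1) then repV # map fst chV else repVI # map fst chVI)"


lemma ck_psi_closed: "\<forall>r\<in>set psiP. \<forall>v\<in>set psiP. rfi r v \<in> set psi \<and> (ipi r r dvd 2 * ipi v r)" by code_simp
lemma ck_posi: "\<forall>v\<in>set psi. posi v \<in> set psiP" by code_simp
lemma ck_neg: "\<forall>v\<in>set psiP. sci (-1) v \<notin> set psiP" by code_simp
lemma ck_crit: "\<forall>v\<in>set psi. crit v \<longleftrightarrow> v \<in> set psiP" by code_simp
lemma ck_len: "\<forall>v\<in>set psiP. ipi v v = 4 \<or> ipi v v = 8" by code_simp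
lemma ck_phi_closed1: "\<forall>v\<in>set phi. sbE v (scE (ipEi v (1,0,0,0,0,0)) (1,0,0,0,0,0)) \<in> set phi" by code_simp
lemma ck_phi_closed2: "\<forall>v\<in>set phi. sbE v (scE (ipEi v (0,1,0,0,0,0)) (0,1,0,0,0,0)) \<in> set phi" by code_simp
lemma ck_phi_closed3: "\<forall>v\<in>set phi. sbE v (scE (ipEi v (0,0,1,0,0,0)) (0,0,1,0,0,0)) \<in> set phi" by code_simp
lemma ck_phi_closed4: "\<forall>v\<in>set phi. sbE v (scE (ipEi v (0,0,0,1,0,0)) (0,0,0,1,0,0)) \<in> set phi" by code_simp
lemma ck_phi_closed5: "\<forall>v\<in>set phi. sbE v (scE (ipEi v (0,0,0,0,1,0)) (0,0,0,0,1,0)) \<in> set phi" by code_simp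
lemma ck_phi_closed6: "\<forall>v\<in>set phi. sbE v (scE (ipEi v (0,0,0,0,0,1)) (0,0,0,0,0,1)) \<in> set phi" by code_simp
lemma ck_chainE: "chainok (\<lambda>i. i \<in> {1..6}) rfE (map unitE [1,2,3,4,5,6]) chainE" by code_simp
lemma ck_phi_chain: "set phi \<subseteq> set (map unitE [1,2,3,4,5,6]) \<union> set (map fst chainE)" by code_simp
lemma ck_phiP: "filter nonneg6 phi = phiP" by code_simp

lemma ck_sig: "\<forall>v\<in>set phiP. sigi v \<in> set phiP \<and> pEi (sigi v) = pEi v" by code_simp
lemma ck_pE_into: "set (map pEi phiP) \<subseteq> set psiP" by code_simp
lemma ck_pE_onto: "set psiP \<subseteq> set (map pEi phiP)" by code_simp
lemma ck_fiber: "\<forall>v\<in>set phiP. \<forall>b\<in>set phiP. pEi v = pEi b \<longrightarrow> v = b \<or> v = sigi b" by code_simp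
lemma ck_chI: "chainok (\<lambda>r. r \<in> set psiP) (\<lambda>r U. map (posi \<circ> rfi r) U) [repI] chI" by code_simp
lemma ck_chII: "chainok (\<lambda>r. r \<in> set psiP) (\<lambda>r U. map (posi \<circ> rfi r) U) [repII] chII" by code_simp
lemma ck_chIII: "chainok (\<lambda>r. r \<in> set psiP) (\<lambda>r U. map (posi \<circ> rfi r) U) [repIII] chIII" by code_simp
lemma ck_chIV: "chainok (\<lambda>r. r \<in> set psiP) (\<lambda>r U. map (posi \<circ> rfi r) U) [repIV] chIV" by code_simp
lemma ck_chV: "chainok (\<lambda>r. r \<in> set psiP) (\<lambda>r U. map (posi \<circ> rfi r) U) [repV] chV" by code_simp
lemma ck_chVI: "chainok (\<lambda>r. r \<in> set psiP) (\<lambda>r U. map (posi \<circ> rfi r) U) [repVI] chVI" by code_simp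
lemma ck_adm: "list_all admEi (map preimi [repI, repII, repIII, repIV, repV, repVI])" by code_simp
lemma ck_cards: "map (\<lambda>s. card (set (map set (cls s)))) goods = [1,12,12,18,36,3]" by code_simp
lemma ck_card6: "card (set (map (\<lambda>s. set (map set (cls s))) goods)) = 6" by code_simp
lemma ck_shapes: "map shapei [repI, repII, repIII, repIV, repV, repVI] = goods" by code_simp

lemma ck_cls: "\<forall>ys\<in>set (osets psiP). shapei ys \<in> set goods \<longrightarrow> set ys \<in> set (map set (cls (shapei ys)))" by code_simp
lemma ck_wits: "list_all2 (\<lambda>ys w. case w of None \<Rightarrow> shapei ys \<in> set goods | Some w \<Rightarrow> badw (preimi ys) w) (osets psiP) wits" by code_simp


fun R4 :: "v4 \<Rightarrow> vec" where
  "R4 (a,b,c,d) = (\<lambda>k. if k = 1 then of_int a / 2 else if k = 2 then of_int b / 2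
      else if k = 3 then of_int c / 2 else if k = 4 then of_int d / 2 else 0)"

lemma R4_eq_iff: "R4 u = R4 v \<longleftrightarrow> u = v"
proof
  assume h: "R4 u = R4 v"
  obtain a b c d where u: "u = (a,b,c,d)" by (cases u) auto
  obtain a' b' c' d' where v: "v = (a',b',c',d')" by (cases v) auto
  have "R4 u 1 = R4 v 1" "R4 u 2 = R4 v 2" "R4 u 3 = R4 v 3" "R4 u 4 = R4 v 4" using h by auto
  then show "u = v" unfolding u v by simp
qed simp

lemma inj_R4: "inj R4" by (simp add: inj_def R4_eq_iff)

fun adi :: "v4 \<Rightarrow> v4 \<Rightarrow> v4" where "adi (a,b,c,d) (a',b',c',d') = (a+a',b+b',c+c',d+d')"

lemma vadd_R4: "vadd (R4 u) (R4 v) = R4 (adi u v)"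
  by (cases u; cases v) (auto simp: vadd_def add_divide_distrib)
lemma vsub_R4: "vsub (R4 u) (R4 v) = R4 (sbi u v)"
  by (cases u; cases v) (auto simp: vsub_def diff_divide_distrib)
lemma vsc_R4: "vsc (of_int k) (R4 v) = R4 (sci k v)"
  by (cases v) (auto simp: vsc_def)
lemma vneg_R4: "vneg (R4 v) = R4 (sci (-1) v)"
  by (cases v) (auto simp: vneg_def)

lemma sum4: "(\<Sum>k\<in>{1..4::nat}. f k) = f 1 + f 2 + f 3 + f 4"
proof -
  have "{1..4::nat} = {1,2,3,4}" by auto
  then show ?thesis by (simp add: add.assoc)
qed

lemma ip4_R4: "ip4 (R4 u) (R4 v) = of_int (ipi u v) / 4"
  unfolding ip4_def sum4 by (cases u; cases v) (simp add: field_simps)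

lemma refl4_R4:
  assumes "ipi r r \<noteq> 0" "ipi r r dvd 2 * ipi v r"
  shows "refl4 (R4 r) (R4 v) = R4 (rfi r v)"
proof -
  have "2 * ip4 (R4 v) (R4 r) / ip4 (R4 r) (R4 r) = of_int (2 * ipi v r div ipi r r)"
  proof -
    obtain q where q: "2 * ipi v r = ipi r r * q" using assms(2) by (auto simp: dvd_def)
    have "2 * ip4 (R4 v) (R4 r) / ip4 (R4 r) (R4 r) = of_int (2 * ipi v r) / of_int (ipi r r)"
      by (simp add: ip4_R4)
    also have "\<dots> = of_int q" using assms(1) by (simp add: q)
    also have "q = 2 * ipi v r div ipi r r" using assms(1) by (simp add: q)
    finally show ?thesis .
  qed
  then show ?thesis by (simp add: refl4_def rfi_def vsc_R4 vsub_R4)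
qed

fun E6 :: "v6 \<Rightarrow> vec" where
  "E6 (a1,a2,a3,a4,a5,a6) = (\<lambda>k. if k = 1 then of_int a1 else if k = 2 then of_int a2
      else if k = 3 then of_int a3 else if k = 4 then of_int a4 else if k = 5 then of_int a5
      else if k = 6 then of_int a6 else 0)"

lemma E6_eq_iff: "E6 u = E6 v \<longleftrightarrow> u = v"
proof
  assume h: "E6 u = E6 v"
  obtain a1 a2 a3 a4 a5 a6 where u: "u = (a1,a2,a3,a4,a5,a6)" by (cases u) auto
  obtain b1 b2 b3 b4 b5 b6 where v: "v = (b1,b2,b3,b4,b5,b6)" by (cases v) auto
  have "E6 u 1 = E6 v 1" "E6 u 2 = E6 v 2" "E6 u 3 = E6 v 3" "E6 u 4 = E6 v 4"
       "E6 u 5 = E6 v 5" "E6 u 6 = E6 v 6" using h by auto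
  then show "u = v" unfolding u v by simp
qed simp

lemma inj_E6: "inj E6" by (simp add: inj_def E6_eq_iff)

fun adE :: "v6 \<Rightarrow> v6 \<Rightarrow> v6" where
  "adE (a1,a2,a3,a4,a5,a6) (b1,b2,b3,b4,b5,b6) = (a1+b1,a2+b2,a3+b3,a4+b4,a5+b5,a6+b6)"

lemma vadd_E6: "vadd (E6 u) (E6 v) = E6 (adE u v)"
  by (cases u; cases v) (auto simp: vadd_def)
lemma vsub_E6: "vsub (E6 u) (E6 v) = E6 (sbE u v)"
  by (cases u; cases v) (auto simp: vsub_def)
lemma vsc_E6: "vsc (of_int k) (E6 v) = E6 (scE k v)"
  by (cases v) (auto simp: vsc_def)
lemma vneg_E6: "vneg (E6 v) = E6 (scE (-1) v)"
  by (cases v) (auto simp: vneg_def)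

lemma sum6: "(\<Sum>k\<in>{1..6::nat}. f k) = f 1 + f 2 + f 3 + f 4 + f 5 + f 6"
proof -
  have "{1..6::nat} = {1,2,3,4,5,6}" by auto
  then show ?thesis by (simp add: add.assoc)
qed

lemma cartanE_vals:
  "cartanE 1 1 = 2" "cartanE 1 2 = 0" "cartanE 1 3 = -1" "cartanE 1 4 = 0" "cartanE 1 5 = 0" "cartanE 1 6 = 0"
  "cartanE 2 1 = 0" "cartanE 2 2 = 2" "cartanE 2 3 = 0" "cartanE 2 4 = -1" "cartanE 2 5 = 0" "cartanE 2 6 = 0"
  "cartanE 3 1 = -1" "cartanE 3 2 = 0" "cartanE 3 3 = 2" "cartanE 3 4 = -1" "cartanE 3 5 = 0" "cartanE 3 6 = 0"
  "cartanE 4 1 = 0" "cartanE 4 2 = -1" "cartanE 4 3 = -1" "cartanE 4 4 = 2" "cartanE 4 5 = -1" "cartanE 4 6 = 0"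
  "cartanE 5 1 = 0" "cartanE 5 2 = 0" "cartanE 5 3 = 0" "cartanE 5 4 = -1" "cartanE 5 5 = 2" "cartanE 5 6 = -1"
  "cartanE 6 1 = 0" "cartanE 6 2 = 0" "cartanE 6 3 = 0" "cartanE 6 4 = 0" "cartanE 6 5 = -1" "cartanE 6 6 = 2"
  by (simp_all add: cartanE_def doubleton_eq_iff)

lemma ipE_E6: "ipE (E6 u) (E6 v) = of_int (ipEi u v)"
  unfolding ipE_def sum6 cartanE_vals by (cases u; cases v) (simp add: algebra_simps)

lemma sigmaE_E6: "sigmaE (E6 v) = E6 (sigi v)"
  by (cases v) (auto simp: sigmaE_def sperm_def)

lemma eps_R4: "eps 1 = R4 (2,0,0,0)" "eps 2 = R4 (0,2,0,0)" "eps 3 = R4 (0,0,2,0)" "eps 4 = R4 (0,0,0,2)"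
  by (auto simp: eps_def)

lemma beta_R4: "beta1 = R4 (1,-1,-1,-1)" "beta2 = R4 (0,2,0,0)" "beta3 = R4 (0,-2,2,0)" "beta4 = R4 (0,0,-2,2)"
  by (auto simp: beta1_def beta2_def beta3_def beta4_def eps_def vsc_def vsub_def)

lemma pE_E6: "pE (E6 v) = R4 (pEi v)"
  by (cases v) (auto simp: pE_def beta_R4 vadd_def vsc_def field_simps)

lemma alphaE_E6: "alphaE 1 = E6 (1,0,0,0,0,0)" "alphaE 2 = E6 (0,1,0,0,0,0)" "alphaE 3 = E6 (0,0,1,0,0,0)"
  "alphaE 4 = E6 (0,0,0,1,0,0)" "alphaE 5 = E6 (0,0,0,0,1,0)" "alphaE 6 = E6 (0,0,0,0,0,1)"
  by (auto simp: alphaE_def)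

lemma reflE_E6: "ipEi a a = 2 \<Longrightarrow> reflE (E6 a) (E6 v) = E6 (sbE v (scE (ipEi v a) a))"
  by (simp add: reflE_def ipE_E6 vsc_E6 vsub_E6)

declare R4.simps[simp del] E6.simps[simp del]


lemma Psi_f1:
  assumes "a \<in> {2,-2}"
  shows "R4 (a,0,0,0) \<in> Psi" "R4 (0,a,0,0) \<in> Psi" "R4 (0,0,a,0) \<in> Psi" "R4 (0,0,0,a) \<in> Psi"
proof -
  have s: "of_int a / 2 \<in> {1,-1::real}" using assms by auto
  have h: "\<And>i. i \<in> {1..4} \<Longrightarrow> vsc (of_int a / 2) (eps i) \<in> Psi"
    unfolding Psi_def using s by blast
  have "R4 (a,0,0,0) = vsc (of_int a / 2) (eps 1)" "R4 (0,a,0,0) = vsc (of_int a / 2) (eps 2)"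
    "R4 (0,0,a,0) = vsc (of_int a / 2) (eps 3)" "R4 (0,0,0,a) = vsc (of_int a / 2) (eps 4)"
    by (auto simp: fun_eq_iff vsc_def eps_def R4.simps)
  then show "R4 (a,0,0,0) \<in> Psi" "R4 (0,a,0,0) \<in> Psi" "R4 (0,0,a,0) \<in> Psi" "R4 (0,0,0,a) \<in> Psi"
    using h[of 1] h[of 2] h[of 3] h[of 4] by auto
qed

lemma Psi_f2':
  assumes "s \<in> {1,-1}" "t \<in> {1,-1}" "1 \<le> i" "i < j" "j \<le> 4" "v = vadd (vsc s (eps i)) (vsc t (eps j))"
  shows "v \<in> Psi"
  unfolding Psi_def using assms by blast

lemma Psi_f2:
  assumes "a \<in> {2,-2}" "b \<in> {2,-2}"
  shows "R4 (a,b,0,0) \<in> Psi" "R4 (a,0,b,0) \<in> Psi" "R4 (a,0,0,b) \<in> Psi"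
        "R4 (0,a,b,0) \<in> Psi" "R4 (0,a,0,b) \<in> Psi" "R4 (0,0,a,b) \<in> Psi"
proof -
  have s: "of_int a / 2 \<in> {1,-1::real}" "of_int b / 2 \<in> {1,-1::real}" using assms by auto
  show "R4 (a,b,0,0) \<in> Psi" by (rule Psi_f2'[OF s, of 1 2]) (auto simp: fun_eq_iff vsc_def eps_def vadd_def R4.simps)
  show "R4 (a,0,b,0) \<in> Psi" by (rule Psi_f2'[OF s, of 1 3]) (auto simp: fun_eq_iff vsc_def eps_def vadd_def R4.simps)
  show "R4 (a,0,0,b) \<in> Psi" by (rule Psi_f2'[OF s, of 1 4]) (auto simp: fun_eq_iff vsc_def eps_def vadd_def R4.simps)
  show "R4 (0,a,b,0) \<in> Psi" by (rule Psi_f2'[OF s, of 2 3]) (auto simp: fun_eq_iff vsc_def eps_def vadd_def R4.simps)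
  show "R4 (0,a,0,b) \<in> Psi" by (rule Psi_f2'[OF s, of 2 4]) (auto simp: fun_eq_iff vsc_def eps_def vadd_def R4.simps)
  show "R4 (0,0,a,b) \<in> Psi" by (rule Psi_f2'[OF s, of 3 4]) (auto simp: fun_eq_iff vsc_def eps_def vadd_def R4.simps)
qed

lemma Psi_f3:
  assumes "a \<in> {1,-1}" "b \<in> {1,-1}" "c \<in> {1,-1}" "d \<in> {1,-1}"
  shows "R4 (a,b,c,d) \<in> Psi"
proof -
  define s :: "nat \<Rightarrow> real" where "s = (\<lambda>k. if k = 1 then of_int a else if k = 2 then of_int b
     else if k = 3 then of_int c else of_int d)"
  have s1: "\<forall>k\<in>{1..4}. s k \<in> {1,-1}" using assms by (auto simp: s_def)
  have "R4 (a,b,c,d) = (\<lambda>k. if k \<in> {1..4} then s k / 2 else 0)"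
    by (auto simp: fun_eq_iff s_def R4.simps)
  then show ?thesis unfolding Psi_def using s1 by blast
qed

lemma R4_psi_sub: "R4 ` set psi \<subseteq> Psi"
  unfolding psi_def psiP_def by (simp add: Psi_f1 Psi_f2 Psi_f3)

fun ue :: "int \<Rightarrow> nat \<Rightarrow> v4" where
  "ue k i = (if i = 1 then (k,0,0,0) else if i = 2 then (0,k,0,0) else if i = 3 then (0,0,k,0) else (0,0,0,k))"

lemma vsc_eps_R4: "i \<in> {1..4} \<Longrightarrow> vsc (of_int k) (eps i) = R4 (ue (2*k) i)"
  by (auto simp: fun_eq_iff vsc_def eps_def R4.simps)

lemma pm1_int: "(s::real) \<in> {1,-1} \<Longrightarrow> \<exists>k::int. k \<in> {1,-1} \<and> s = of_int k"
  by (auto intro: exI[of _ 1] exI[of _ "-1"])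

lemma ck_ue1: "\<forall>k\<in>{1,-1::int}. \<forall>i\<in>{1,2,3,4::nat}. ue (2*k) i \<in> set psi" by code_simp
lemma ck_ue2: "\<forall>k\<in>{1,-1::int}. \<forall>m\<in>{1,-1::int}.
   adi (ue (2*k) 1) (ue (2*m) 2) \<in> set psi \<and> adi (ue (2*k) 1) (ue (2*m) 3) \<in> set psi \<and>
   adi (ue (2*k) 1) (ue (2*m) 4) \<in> set psi \<and> adi (ue (2*k) 2) (ue (2*m) 3) \<in> set psi \<and>
   adi (ue (2*k) 2) (ue (2*m) 4) \<in> set psi \<and> adi (ue (2*k) 3) (ue (2*m) 4) \<in> set psi" by code_simp
lemma ck_f3: "\<forall>a\<in>{1,-1::int}. \<forall>b\<in>{1,-1::int}. \<forall>c\<in>{1,-1::int}. \<forall>d\<in>{1,-1::int}. (a,b,c,d) \<in> set psi"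
  by code_simp

lemma Psi_sub: "Psi \<subseteq> R4 ` set psi"
proof
  fix x assume "x \<in> Psi"
  then consider (f1) s i where "s \<in> {1,-1}" "i \<in> {1..4}" "x = vsc s (eps i)"
    | (f2) s t i j where "s \<in> {1,-1}" "t \<in> {1,-1}" "1 \<le> i" "i < j" "j \<le> 4"
          "x = vadd (vsc s (eps i)) (vsc t (eps j))"
    | (f3) s where "\<forall>k\<in>{1..4}. s k \<in> {1,-1}" "x = (\<lambda>k. if k \<in> {1..4} then s k / 2 else 0)"
    unfolding Psi_def by blast
  then show "x \<in> R4 ` set psi"
  proof cases
    case f1
    obtain k where k: "k \<in> {1,-1}" "s = of_int k" using pm1_int[OF f1(1)] by blast
    have "i = 1 \<or> i = 2 \<or> i = 3 \<or> i = 4" using f1(2) by auto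
    then have "ue (2*k) i \<in> set psi" using ck_ue1[rule_format, OF k(1)] by auto
    then show ?thesis using k f1 vsc_eps_R4[OF f1(2), of k] by auto
  next
    case f2
    obtain k where k: "k \<in> {1,-1}" "s = of_int k" using pm1_int[OF f2(1)] by blast
    obtain m where m: "m \<in> {1,-1}" "t = of_int m" using pm1_int[OF f2(2)] by blast
    have x: "x = R4 (adi (ue (2*k) i) (ue (2*m) j))" using f2 k m
      by (simp add: vsc_eps_R4 vadd_R4)
    have "(i = 1 \<and> j = 2) \<or> (i = 1 \<and> j = 3) \<or> (i = 1 \<and> j = 4) \<or> (i = 2 \<and> j = 3) \<or> (i = 2 \<and> j = 4)
       \<or> (i = 3 \<and> j = 4)" using f2(3-5) by auto
    then have "adi (ue (2*k) i) (ue (2*m) j) \<in> set psi" using ck_ue2[rule_format, OF k(1) m(1)]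
      by (elim disjE) simp_all
    then show ?thesis unfolding x by auto
  next
    case f3
    have "\<exists>a b c d. a \<in> {1,-1} \<and> b \<in> {1,-1} \<and> c \<in> {1,-1} \<and> d \<in> {1,-1} \<and>
       s 1 = of_int a \<and> s 2 = of_int b \<and> s 3 = of_int c \<and> s 4 = of_int d"
    proof -
      have "s 1 \<in> {1,-1}" "s 2 \<in> {1,-1}" "s 3 \<in> {1,-1}" "s 4 \<in> {1,-1}" using f3(1) by auto
      then show ?thesis using pm1_int by meson
    qed
    then obtain a b c d where abcd: "a \<in> {1,-1}" "b \<in> {1,-1}" "c \<in> {1,-1}" "d \<in> {1,-1}"
      "s 1 = of_int a" "s 2 = of_int b" "s 3 = of_int c" "s 4 = of_int d" by blast
    have x: "x = R4 (a,b,c,d)" unfolding f3(2) using abcd(5-8)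
      by (auto simp: fun_eq_iff R4.simps)
    have "(a,b,c,d) \<in> set psi" using abcd(1-4) ck_f3 by blast
    then show ?thesis unfolding x by auto
  qed
qed

lemma Psi_eq: "Psi = R4 ` set psi" using Psi_sub R4_psi_sub by blast


lemma comb_coord: "vadd (vsc a beta1) (vadd (vsc b beta2) (vadd (vsc c beta3) (vsc d beta4))) =
  (\<lambda>k. if k = 1 then a/2 else if k = 2 then -a/2 + b - c else if k = 3 then -a/2 + c - d
       else if k = 4 then -a/2 + d else 0)"
  by (auto simp: fun_eq_iff vadd_def vsc_def beta_R4 R4.simps field_simps)

lemma comb_R4: "(\<exists>a b c d. a \<ge> 0 \<and> b \<ge> 0 \<and> c \<ge> 0 \<and> d \<ge> 0 \<and>
      R4 v = vadd (vsc a beta1) (vadd (vsc b beta2) (vadd (vsc c beta3) (vsc d beta4)))) \<longleftrightarrow> crit v"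
proof -
  obtain p q r s where v: "v = (p,q,r,s)" by (cases v) auto
  show ?thesis
  proof
    assume "\<exists>a b c d. a \<ge> 0 \<and> b \<ge> 0 \<and> c \<ge> 0 \<and> d \<ge> 0 \<and>
      R4 v = vadd (vsc a beta1) (vadd (vsc b beta2) (vadd (vsc c beta3) (vsc d beta4)))"
    then obtain a b c d where h: "a \<ge> 0" "b \<ge> 0" "c \<ge> 0" "d \<ge> 0"
      "R4 v = vadd (vsc a beta1) (vadd (vsc b beta2) (vadd (vsc c beta3) (vsc d beta4)))" by blast
    have e: "of_int p / 2 = a/2" "of_int q / 2 = -a/2+b-c" "of_int r / 2 = -a/2+c-d" "of_int s / 2 = -a/2+d"
      using fun_cong[OF h(5), of 1] fun_cong[OF h(5), of 2] fun_cong[OF h(5), of 3] fun_cong[OF h(5), of 4]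
      by (simp_all add: comb_coord v R4.simps)
    have "real_of_int p \<ge> 0" "real_of_int p + of_int s \<ge> 0" "2 * real_of_int p + of_int r + of_int s \<ge> 0"
      "3 * real_of_int p + of_int q + of_int r + of_int s \<ge> 0" using e h(1-4) by linarith+
    then show "crit v" unfolding v by simp
  next
    assume "crit v"
    then have c: "0 \<le> p" "0 \<le> p+s" "0 \<le> 2*p+r+s" "0 \<le> 3*p+q+r+s" by (simp_all add: v)
    show "\<exists>a b c d. a \<ge> 0 \<and> b \<ge> 0 \<and> c \<ge> 0 \<and> d \<ge> 0 \<and>
      R4 v = vadd (vsc a beta1) (vadd (vsc b beta2) (vadd (vsc c beta3) (vsc d beta4)))"
      apply (rule exI[of _ "of_int p"], rule exI[of _ "of_int (3*p+q+r+s)/2"],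
             rule exI[of _ "of_int (2*p+r+s)/2"], rule exI[of _ "of_int (p+s)/2"])
      using c by (auto simp: comb_coord v R4.simps fun_eq_iff field_simps)
  qed
qed

lemma psiP_sub_psi: "set psiP \<subseteq> set psi" by (simp add: psi_def)

lemma PsiPlus_eq: "PsiPlus = R4 ` set psiP"
proof -
  have "PsiPlus = {x \<in> R4 ` set psi. \<exists>a b c d. a \<ge> 0 \<and> b \<ge> 0 \<and> c \<ge> 0 \<and> d \<ge> 0 \<and>
      x = vadd (vsc a beta1) (vadd (vsc b beta2) (vadd (vsc c beta3) (vsc d beta4)))}"
    unfolding PsiPlus_def Psi_eq ..
  also have "\<dots> = R4 ` {v \<in> set psi. crit v}" using comb_R4 by blast
  also have "{v \<in> set psi. crit v} = set psiP" using ck_crit psiP_sub_psi by blast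
  finally show ?thesis .
qed

lemma PsiPlus_sub: "PsiPlus \<subseteq> Psi" unfolding PsiPlus_def by blast

lemma R4_in_PsiPlus: "R4 v \<in> PsiPlus \<longleftrightarrow> v \<in> set psiP"
  by (simp add: PsiPlus_eq inj_image_mem_iff[OF inj_R4])

lemma R4_in_Psi: "R4 v \<in> Psi \<longleftrightarrow> v \<in> set psi"
  by (simp add: Psi_eq inj_image_mem_iff[OF inj_R4])

lemma posF_R4: "posF (R4 v) = R4 (posi v)"
  by (simp add: posF_def posi_def R4_in_PsiPlus vneg_R4)

lemma sci_sci: "sci (-1) (sci (-1) v) = v" by (cases v) simp

lemma vneg_vneg: "vneg (vneg v) = v" by (simp add: vneg_def)

lemma Psi_cases: "x \<in> Psi \<Longrightarrow> \<exists>u\<in>set psiP. x = R4 u \<or> x = vneg (R4 u)"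
  unfolding Psi_eq psi_def by (auto simp: vneg_R4 simp del: sci.simps)

lemma Psi_vneg: "x \<in> Psi \<Longrightarrow> vneg x \<in> Psi"
proof -
  assume x: "x \<in> Psi"
  obtain u where u: "u \<in> set psiP" "x = R4 u \<or> x = vneg (R4 u)" using Psi_cases[OF x] by blast
  have "R4 u \<in> Psi" "R4 (sci (-1) u) \<in> Psi" using u(1) by (auto simp: R4_in_Psi psi_def simp del: sci.simps)
  then show ?thesis using u(2) by (auto simp: vneg_vneg vneg_R4 sci_sci simp del: sci.simps)
qed

lemma ip4_R4_self: "u \<in> set psiP \<Longrightarrow> ip4 (R4 u) (R4 u) = 1 \<or> ip4 (R4 u) (R4 u) = 2"
  using ck_len by (auto simp: ip4_R4)

lemma ip4_sub: "ip4 (vsub u (vsc c r)) v = ip4 u v - c * ip4 r v"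
  by (simp add: ip4_def vsub_def vsc_def algebra_simps sum_subtractf sum_distrib_left)
lemma ip4_sub2: "ip4 v (vsub u (vsc c r)) = ip4 v u - c * ip4 v r"
  by (simp add: ip4_def vsub_def vsc_def algebra_simps sum_subtractf sum_distrib_left)
lemma ip4_sym: "ip4 u v = ip4 v u" by (simp add: ip4_def mult.commute)
lemma ip4_neg1: "ip4 (vneg u) v = - ip4 u v" by (simp add: ip4_def vneg_def sum_negf)
lemma ip4_neg2: "ip4 u (vneg v) = - ip4 u v" by (simp add: ip4_def vneg_def sum_negf)

lemma ip4_Psi_nz: "r \<in> Psi \<Longrightarrow> ip4 r r \<noteq> 0"
proof -
  assume r: "r \<in> Psi"
  obtain u where u: "u \<in> set psiP" "r = R4 u \<or> r = vneg (R4 u)" using Psi_cases[OF r] by blast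
  have "ip4 r r = ip4 (R4 u) (R4 u)" using u(2) by (auto simp: ip4_neg1 ip4_neg2)
  then show ?thesis using ip4_R4_self[OF u(1)] by auto
qed

lemma refl4_neg: "refl4 r (vneg v) = vneg (refl4 r v)"
  unfolding refl4_def ip4_neg1 by (simp add: fun_eq_iff vsub_def vsc_def vneg_def)

lemma refl4_negr: "refl4 (vneg r) = refl4 r"
  unfolding refl4_def ip4_neg1 ip4_neg2 by (simp add: fun_eq_iff vsub_def vsc_def vneg_def)

lemma refl4_invol: "ip4 r r \<noteq> 0 \<Longrightarrow> refl4 r (refl4 r v) = v"
proof -
  assume nz: "ip4 r r \<noteq> 0"
  have h: "2 * ip4 (refl4 r v) r / ip4 r r = - (2 * ip4 v r / ip4 r r)"
    unfolding refl4_def ip4_sub using nz by (simp add: field_simps)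
  have "refl4 r (refl4 r v) = vsub (refl4 r v) (vsc (2 * ip4 (refl4 r v) r / ip4 r r) r)"
    by (rule refl4_def)
  also have "\<dots> = v" unfolding h by (simp add: refl4_def fun_eq_iff vsub_def vsc_def)
  finally show ?thesis .
qed

lemma refl4_ip: "ip4 r r \<noteq> 0 \<Longrightarrow> ip4 (refl4 r u) (refl4 r v) = ip4 u v"
  unfolding refl4_def
  by (simp add: ip4_sub ip4_sub2 field_simps ip4_sym[of r u] ip4_sym[of r v])

lemma refl4_R4': "r \<in> set psiP \<Longrightarrow> v \<in> set psiP \<Longrightarrow> refl4 (R4 r) (R4 v) = R4 (rfi r v)"
  apply (rule refl4_R4)
  using ck_psi_closed ck_len by fastforce+

lemma refl4_Psi: "r \<in> Psi \<Longrightarrow> x \<in> Psi \<Longrightarrow> refl4 r x \<in> Psi"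
proof -
  assume r: "r \<in> Psi" and x: "x \<in> Psi"
  obtain r' where r': "r' \<in> set psiP" "r = R4 r' \<or> r = vneg (R4 r')" using Psi_cases[OF r] by blast
  obtain x' where x': "x' \<in> set psiP" "x = R4 x' \<or> x = vneg (R4 x')" using Psi_cases[OF x] by blast
  have "refl4 (R4 r') (R4 x') \<in> Psi" using refl4_R4'[OF r'(1) x'(1)] ck_psi_closed r'(1) x'(1)
    by (auto simp: R4_in_Psi)
  then show ?thesis using r'(2) x'(2) Psi_vneg by (auto simp: refl4_negr refl4_neg)
qed

lemma PsiPlus_vneg: "x \<in> PsiPlus \<Longrightarrow> vneg x \<notin> PsiPlus"
proof -
  assume "x \<in> PsiPlus"
  then obtain u where u: "u \<in> set psiP" "x = R4 u" by (auto simp: PsiPlus_eq)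
  then show ?thesis using ck_neg by (simp add: vneg_R4 R4_in_PsiPlus del: sci.simps)
qed

lemma vneg_inj: "vneg x = vneg y \<longleftrightarrow> x = y" by (metis vneg_vneg)

lemma Psi_not_plus: "x \<in> Psi \<Longrightarrow> x \<notin> PsiPlus \<Longrightarrow> vneg x \<in> PsiPlus"
  using Psi_cases[of x] by (auto simp: vneg_vneg PsiPlus_eq)

lemma posF_neg: "x \<in> Psi \<Longrightarrow> posF (vneg x) = posF x"
  using PsiPlus_vneg Psi_not_plus by (auto simp: posF_def vneg_vneg)

lemma posF_in: "x \<in> Psi \<Longrightarrow> posF x \<in> PsiPlus"
  using Psi_not_plus by (auto simp: posF_def)

lemma posF_id: "x \<in> PsiPlus \<Longrightarrow> posF x = x" by (simp add: posF_def)

lemma posF_eq: "x \<in> Psi \<Longrightarrow> y \<in> Psi \<Longrightarrow> posF x = posF y \<Longrightarrow> x = y \<or> x = vneg y"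
  by (auto simp: posF_def vneg_vneg vneg_inj split: if_splits)

lemma ip4_posF: "ip4 (posF x) (posF y) = ip4 x y \<or> ip4 (posF x) (posF y) = - ip4 x y"
  by (auto simp: posF_def ip4_neg1 ip4_neg2)

lemma ip4_posF_self: "ip4 (posF x) (posF x) = ip4 x x"
  by (auto simp: posF_def ip4_neg1 ip4_neg2)

section \<open>The Weyl group\<close>

lemma W_odd: "w \<in> WF4 \<Longrightarrow> w (vneg v) = vneg (w v)"
  by (induction w arbitrary: v rule: WF4.induct) (auto simp: refl4_neg)

lemma W_Psi: "w \<in> WF4 \<Longrightarrow> x \<in> Psi \<Longrightarrow> w x \<in> Psi"
  by (induction w arbitrary: x rule: WF4.induct) (auto simp: refl4_Psi)

lemma W_ip: "w \<in> WF4 \<Longrightarrow> ip4 (w u) (w v) = ip4 u v"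
  by (induction w arbitrary: u v rule: WF4.induct) (auto simp: refl4_ip ip4_Psi_nz)

lemma W_comp: "w1 \<in> WF4 \<Longrightarrow> w2 \<in> WF4 \<Longrightarrow> w1 \<circ> w2 \<in> WF4"
proof (induction w1 rule: WF4.induct)
  case WF4_id then show ?case by simp
next
  case (WF4_refl w r)
  then have "w \<circ> w2 \<in> WF4" by (simp add: comp_def)
  then have "refl4 r \<circ> (w \<circ> w2) \<in> WF4" using WF4_refl(2) by (rule WF4.WF4_refl)
  then show ?case by (simp only: comp_assoc)
qed

lemma W_refl: "r \<in> Psi \<Longrightarrow> refl4 r \<in> WF4"
  using WF4.WF4_refl[OF WF4.WF4_id] by simp

lemma W_inv: "w \<in> WF4 \<Longrightarrow> \<exists>w'\<in>WF4. \<forall>x. w' (w x) = x"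
proof (induction w rule: WF4.induct)
  case WF4_id then show ?case using WF4.WF4_id by (intro bexI[of _ id]) auto
next
  case (WF4_refl w r)
  then obtain w' where w': "w' \<in> WF4" "\<forall>x. w' (w x) = x" by blast
  have "w' \<circ> refl4 r \<in> WF4" using W_comp[OF w'(1) W_refl[OF WF4_refl(2)]] .
  moreover have "\<forall>x. (w' \<circ> refl4 r) ((refl4 r \<circ> w) x) = x"
    using w'(2) refl4_invol[OF ip4_Psi_nz[OF WF4_refl(2)]] by simp
  ultimately show ?case by blast
qed

lemma actF_comp: "w1 \<in> WF4 \<Longrightarrow> w2 \<in> WF4 \<Longrightarrow> X \<subseteq> Psi \<Longrightarrow>
   actFset (w1 \<circ> w2) X = actFset w1 (actFset w2 X)"
proof -
  assume w1: "w1 \<in> WF4" and w2: "w2 \<in> WF4" and X: "X \<subseteq> Psi"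
  have "\<And>b. b \<in> X \<Longrightarrow> posF (w1 (w2 b)) = posF (w1 (posF (w2 b)))"
  proof -
    fix b assume b: "b \<in> X"
    have "w2 b \<in> Psi" using W_Psi[OF w2] X b by auto
    then have "w1 (w2 b) \<in> Psi" using W_Psi[OF w1] by auto
    moreover have "posF (w2 b) = w2 b \<or> posF (w2 b) = vneg (w2 b)" by (simp add: posF_def)
    ultimately show "posF (w1 (w2 b)) = posF (w1 (posF (w2 b)))"
      using posF_neg W_odd[OF w1] by auto
  qed
  then show ?thesis unfolding actFset_def actF_def image_image by (auto intro: image_cong)
qed

lemma actF_id: "X \<subseteq> PsiPlus \<Longrightarrow> actFset id X = X"
proof -
  assume X: "X \<subseteq> PsiPlus"
  have "actFset id X = (\<lambda>x. x) ` X" unfolding actFset_def actF_def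
    using X posF_id by (intro image_cong) auto
  then show ?thesis by simp
qed

lemma actF_PsiPlus: "w \<in> WF4 \<Longrightarrow> X \<subseteq> Psi \<Longrightarrow> actFset w X \<subseteq> PsiPlus"
  unfolding actFset_def actF_def using posF_in W_Psi by blast

lemma orbit_same: "R \<subseteq> PsiPlus \<Longrightarrow> X \<in> orbitF R \<Longrightarrow> orbitF X = orbitF R"
proof -
  assume R: "R \<subseteq> PsiPlus" and X: "X \<in> orbitF R"
  have RP: "R \<subseteq> Psi" using R PsiPlus_sub by blast
  obtain w where w: "w \<in> WF4" "X = actFset w R" using X unfolding orbitF_def by blast
  have XP: "X \<subseteq> Psi" using actF_PsiPlus[OF w(1) RP] w(2) PsiPlus_sub by blast
  obtain w' where w': "w' \<in> WF4" "\<forall>x. w' (w x) = x" using W_inv[OF w(1)] by blast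
  have ww: "w' \<circ> w = id" using w'(2) by auto
  show ?thesis
  proof
    show "orbitF X \<subseteq> orbitF R"
    proof
      fix T assume "T \<in> orbitF X"
      then obtain v where v: "v \<in> WF4" "T = actFset v X" unfolding orbitF_def by blast
      then have "T = actFset (v \<circ> w) R" using actF_comp[OF v(1) w(1) RP] w(2) by simp
      then show "T \<in> orbitF R" unfolding orbitF_def using W_comp[OF v(1) w(1)] by blast
    qed
  next
    show "orbitF R \<subseteq> orbitF X"
    proof
      fix T assume "T \<in> orbitF R"
      then obtain u where u: "u \<in> WF4" "T = actFset u R" unfolding orbitF_def by blast
      have "actFset (u \<circ> w') X = actFset u (actFset w' (actFset w R))"
        using actF_comp[OF u(1) w'(1) XP] w(2) by simp
      also have "actFset w' (actFset w R) = actFset (w' \<circ> w) R"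
        using actF_comp[OF w'(1) w(1) RP] by simp
      also have "\<dots> = R" using ww actF_id[OF R] by simp
      finally have "T = actFset (u \<circ> w') X" using u(2) by metis
      then show "T \<in> orbitF X" unfolding orbitF_def using W_comp[OF u(1) w'(1)] by blast
    qed
  qed
qed

lemma orbit_closed: "T \<in> orbitF R \<Longrightarrow> R \<subseteq> Psi \<Longrightarrow> r \<in> Psi \<Longrightarrow> actFset (refl4 r) T \<in> orbitF R"
proof -
  assume T: "T \<in> orbitF R" and R: "R \<subseteq> Psi" and r: "r \<in> Psi"
  obtain w where w: "w \<in> WF4" "T = actFset w R" using T unfolding orbitF_def by blast
  have "actFset (refl4 r) T = actFset (refl4 r \<circ> w) R"
    using actF_comp[OF W_refl[OF r] w(1) R] w(2) by simp
  then show ?thesis unfolding orbitF_def using WF4.WF4_refl[OF w(1) r] by blast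
qed

lemma orbit_self: "R \<subseteq> PsiPlus \<Longrightarrow> R \<in> orbitF R"
  unfolding orbitF_def using actF_id[of R] WF4.WF4_id by force


section \<open>E6 side\<close>

declare unitE.simps[simp del]

lemma six_cases: "i \<in> {1..6::nat} \<Longrightarrow> i = 1 \<or> i = 2 \<or> i = 3 \<or> i = 4 \<or> i = 5 \<or> i = 6"
  by auto

lemma unitE_E6: "i \<in> {1..6} \<Longrightarrow> alphaE i = E6 (unitE i)"
  by (drule six_cases) (elim disjE; auto simp: fun_eq_iff alphaE_def E6.simps unitE.simps)

lemma ipEi_unit: "i \<in> {1..6} \<Longrightarrow> ipEi (unitE i) (unitE i) = 2"
  by (drule six_cases) (elim disjE; simp add: unitE.simps)

lemma reflE_alpha: "i \<in> {1..6} \<Longrightarrow> reflE (alphaE i) (E6 v) = E6 (rfE i v)"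
  using reflE_E6[OF ipEi_unit] unitE_E6 by (simp add: rfE_def)

lemma rfE_phi: assumes i: "i \<in> {1..6}" and v: "v \<in> set phi" shows "rfE i v \<in> set phi"
  using six_cases[OF i] ck_phi_closed1[rule_format, OF v] ck_phi_closed2[rule_format, OF v]
    ck_phi_closed3[rule_format, OF v] ck_phi_closed4[rule_format, OF v] ck_phi_closed5[rule_format, OF v]
    ck_phi_closed6[rule_format, OF v]
  by (elim disjE; simp add: rfE_def unitE.simps del: sbE.simps scE.simps ipEi.simps)

lemma ck_units: "set (map unitE [1,2,3,4,5,6]) \<subseteq> set phi" by code_simp

lemma PhiE_sub: "PhiE \<subseteq> E6 ` set phi"
proof
  fix x assume "x \<in> PhiE"
  then show "x \<in> E6 ` set phi"
  proof (induction rule: PhiE.induct)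
    case (PhiE_simple i)
    have "unitE i \<in> set phi" using ck_units six_cases[OF PhiE_simple] by auto
    then show ?case using unitE_E6[OF PhiE_simple] by simp
  next
    case (PhiE_refl v i)
    then obtain v' where "v' \<in> set phi" "v = E6 v'" by blast
    then show ?case using reflE_alpha[OF PhiE_refl(2)] rfE_phi[OF PhiE_refl(2)] by auto
  qed
qed

lemma chainok_P: "chainok A f K L \<Longrightarrow> (\<forall>x\<in>set K. P x) \<Longrightarrow> (\<And>i x. A i \<Longrightarrow> P x \<Longrightarrow> P (f i x))
   \<Longrightarrow> \<forall>x\<in>set (map fst L). P x"
proof (induction A f K L rule: chainok.induct)
  case (1 A f K) then show ?case by simp
next
  case (2 A f K c i p L)
  then have "P c" by auto
  then show ?case using 2 by auto
qed

lemma PhiE_sup: "E6 ` set phi \<subseteq> PhiE"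
proof -
  have K: "\<forall>x\<in>set (map unitE [1,2,3,4,5,6]). E6 x \<in> PhiE"
  proof
    fix x assume "x \<in> set (map unitE [1,2,3,4,5,6])"
    then obtain i where "i \<in> set [1,2,3,4,5,6::nat]" "x = unitE i" by auto
    then have "i \<in> {1..6}" "x = unitE i" by auto
    then show "E6 x \<in> PhiE" using PhiE.PhiE_simple unitE_E6 by metis
  qed
  have "\<forall>x\<in>set (map fst chainE). E6 x \<in> PhiE"
    by (rule chainok_P[OF ck_chainE K]) (metis PhiE.PhiE_refl reflE_alpha)
  then show ?thesis using K ck_phi_chain by blast
qed

lemma PhiE_eq: "PhiE = E6 ` set phi" using PhiE_sub PhiE_sup by blast

lemma E6_nonneg: "(\<forall>i. 0 \<le> E6 x i) \<longleftrightarrow> nonneg6 x"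
proof -
  obtain a1 a2 a3 a4 a5 a6 where x: "x = (a1,a2,a3,a4,a5,a6)" by (cases x) auto
  show ?thesis
  proof
    assume h: "\<forall>i. 0 \<le> E6 x i"
    have "0 \<le> E6 x 1" "0 \<le> E6 x 2" "0 \<le> E6 x 3" "0 \<le> E6 x 4" "0 \<le> E6 x 5" "0 \<le> E6 x 6"
      using h by auto
    then show "nonneg6 x" by (simp add: x E6.simps)
  qed (auto simp: x E6.simps)
qed

lemma PhiPlus_eq: "PhiPlus = E6 ` set phiP"
proof -
  have "PhiPlus = E6 ` {x \<in> set phi. nonneg6 x}"
    unfolding PhiPlus_def PhiE_eq using E6_nonneg by blast
  also have "{x \<in> set phi. nonneg6 x} = set phiP" using ck_phiP by (metis set_filter)
  finally show ?thesis .
qed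

lemma E6_in_PhiPlus: "E6 v \<in> PhiPlus \<longleftrightarrow> v \<in> set phiP"
  by (simp add: PhiPlus_eq inj_image_mem_iff[OF inj_E6])

lemma posE_E6: "(if E6 v \<in> PhiPlus then E6 v else vneg (E6 v)) = E6 (posE v)"
  by (simp add: E6_in_PhiPlus posE_def vneg_E6)

lemma vE_E6: "vsub (vsc 2 (E6 g)) (vadd (vsc (of_int a) (E6 g1)) (vadd (vsc (of_int b) (E6 g2)) (vsc (of_int c) (E6 g3))))
   = E6 (sbE (sbE (sbE (scE 2 g) (scE a g1)) (scE b g2)) (scE c g3))"
  by (cases g; cases g1; cases g2; cases g3) (simp add: fun_eq_iff E6.simps vsub_def vsc_def vadd_def)

lemma preimE_R4: "preimE (R4 ` set ys) = E6 ` set (preimi ys)"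
proof -
  have e: "\<And>x. pE (E6 x) \<in> R4 ` set ys \<longleftrightarrow> pEi x \<in> set ys"
    by (simp add: pE_E6 inj_image_mem_iff[OF inj_R4] del: pEi.simps)
  show ?thesis
    unfolding preimE_def preimi_def PhiPlus_eq set_filter
    using e by blast
qed

lemma admE_of: assumes a: "admEi C" shows "admE (E6 ` set C)"
proof -
  have A: "\<forall>g\<in>set C. g \<in> set phiP" and B: "\<forall>g1\<in>set C. \<forall>g2\<in>set C. g1 \<noteq> g2 \<longrightarrow> ipEi g1 g2 = 0"
    and Cc: "\<forall>g\<in>set phi. \<forall>g1\<in>set (Dg C g). \<forall>g2\<in>set (Dg C g). \<forall>g3\<in>set (Dg C g).
          g1 \<noteq> g2 \<and> g1 \<noteq> g3 \<and> g2 \<noteq> g3 \<longrightarrow> posE (vE g g1 g2 g3) \<in> set C"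
    using a unfolding admEi_def by blast+
  have 1: "E6 ` set C \<subseteq> PhiPlus" using A by (auto simp: E6_in_PhiPlus)
  have 2: "\<forall>g1\<in>E6 ` set C. \<forall>g2\<in>E6 ` set C. g1 \<noteq> g2 \<longrightarrow> ipE g1 g2 = 0" using B by (auto simp: ipE_E6)
  show ?thesis unfolding admE_def
    apply (intro conjI 1 2 allI impI)
    subgoal for g1 g2 g3 g
    proof -
      assume h: "g1 \<in> E6 ` set C \<and> g2 \<in> E6 ` set C \<and> g3 \<in> E6 ` set C \<and> g1 \<noteq> g2 \<and> g1 \<noteq> g3 \<and> g2 \<noteq> g3 \<and>
        g \<in> PhiE \<and> ipE g g1 \<in> {1, - 1} \<and> ipE g g2 \<in> {1, - 1} \<and> ipE g g3 \<in> {1, - 1}"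
      then obtain c1 c2 c3 x where c: "c1 \<in> set C" "c2 \<in> set C" "c3 \<in> set C" "x \<in> set phi"
        "g1 = E6 c1" "g2 = E6 c2" "g3 = E6 c3" "g = E6 x" by (auto simp: PhiE_eq)
      have d: "c1 \<noteq> c2" "c1 \<noteq> c3" "c2 \<noteq> c3" using h c by auto
      have i: "ipEi x c1 = 1 \<or> ipEi x c1 = -1" "ipEi x c2 = 1 \<or> ipEi x c2 = -1" "ipEi x c3 = 1 \<or> ipEi x c3 = -1"
        using h c by (auto simp: ipE_E6)
      have "c1 \<in> set (Dg C x)" "c2 \<in> set (Dg C x)" "c3 \<in> set (Dg C x)" using c i by (auto simp: Dg_def)
      then have m: "posE (vE x c1 c2 c3) \<in> set C" using Cc c(4) d by blast
      show ?thesis unfolding c(5-8) ipE_E6 Let_def vE_E6 posE_E6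
        using m by (simp add: vE_def)
    qed
    done
qed

lemma admE_bad: assumes b: "badw C w" shows "\<not> admE (E6 ` set C)"
proof
  assume a: "admE (E6 ` set C)"
  obtain c1 c2 c3 x where w: "w = (c1,c2,c3,x)" by (cases w) auto
  have h: "c1 \<in> set C" "c2 \<in> set C" "c3 \<in> set C" "c1 \<noteq> c2" "c1 \<noteq> c3" "c2 \<noteq> c3" "x \<in> set phi"
    "ipEi x c1 \<in> {1,-1}" "ipEi x c2 \<in> {1,-1}" "ipEi x c3 \<in> {1,-1}" "posE (vE x c1 c2 c3) \<notin> set C"
    using b unfolding badw_def w by auto
  have "(let v = vsub (vsc 2 (E6 x)) (vadd (vsc (ipE (E6 x) (E6 c1)) (E6 c1))
            (vadd (vsc (ipE (E6 x) (E6 c2)) (E6 c2)) (vsc (ipE (E6 x) (E6 c3)) (E6 c3))))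
          in (if v \<in> PhiPlus then v else vneg v) \<in> E6 ` set C)"
  proof -
    have prem: "E6 c1 \<in> E6 ` set C \<and> E6 c2 \<in> E6 ` set C \<and> E6 c3 \<in> E6 ` set C \<and> E6 c1 \<noteq> E6 c2
      \<and> E6 c1 \<noteq> E6 c3 \<and> E6 c2 \<noteq> E6 c3 \<and> E6 x \<in> PhiE \<and> ipE (E6 x) (E6 c1) \<in> {1, -1}
      \<and> ipE (E6 x) (E6 c2) \<in> {1, -1} \<and> ipE (E6 x) (E6 c3) \<in> {1, -1}"
      using h by (auto simp: PhiE_eq E6_eq_iff ipE_E6)
    show ?thesis
      using a unfolding admE_def
      apply (elim conjE)
      apply (drule spec[of _ "E6 c1"], drule spec[of _ "E6 c2"], drule spec[of _ "E6 c3"], drule spec[of _ "E6 x"])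
      apply (erule mp)
      by (rule prem)
  qed
  then have "E6 (posE (vE x c1 c2 c3)) \<in> E6 ` set C"
    unfolding ipE_E6 Let_def vE_E6 posE_E6 by (simp add: vE_def)
  then show False using h(11) by (simp add: inj_image_mem_iff[OF inj_E6])
qed


definition nL :: "vec set \<Rightarrow> nat" where "nL X = card {x\<in>X. ip4 x x = 2}"
definition nS :: "vec set \<Rightarrow> nat" where "nS X = card {x\<in>X. ip4 x x = 1}"
definition shp :: "vec set \<Rightarrow> nat \<times> nat" where "shp X = (nL X, nS X)"
definition orthF :: "vec set \<Rightarrow> bool" where "orthF X \<longleftrightarrow> (\<forall>x\<in>X. \<forall>y\<in>X. x \<noteq> y \<longrightarrow> ip4 x y = 0)"

lemma ip4_R4_eq2: "ip4 (R4 v) (R4 v) = 2 \<longleftrightarrow> ipi v v = 8"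
  by (simp add: ip4_R4)
lemma ip4_R4_eq1: "ip4 (R4 v) (R4 v) = 1 \<longleftrightarrow> ipi v v = 4"
  by (simp add: ip4_R4)
lemma ip4_R4_eq0: "ip4 (R4 u) (R4 v) = 0 \<longleftrightarrow> ipi u v = 0"
  by (simp add: ip4_R4)

lemma shp_R4: "shp (R4 ` set ys) = shapei ys"
proof -
  have 1: "{x \<in> R4 ` set ys. ip4 x x = 2} = R4 ` set (filter (\<lambda>v. ipi v v = 8) ys)"
    using ip4_R4_eq2 by auto
  have 2: "{x \<in> R4 ` set ys. ip4 x x = 1} = R4 ` set (filter (\<lambda>v. ipi v v = 4) ys)"
    using ip4_R4_eq1 by auto
  show ?thesis unfolding shp_def nL_def nS_def shapei_def 1 2
    by (simp add: card_image inj_on_subset[OF inj_R4] del: set_filter)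
qed

lemma actF_inj: assumes w: "w \<in> WF4" and X: "X \<subseteq> PsiPlus" shows "inj_on (actF w) X"
proof (rule inj_onI)
  fix a b assume a: "a \<in> X" and b: "b \<in> X" and e: "actF w a = actF w b"
  have aP: "a \<in> Psi" "b \<in> Psi" using a b X PsiPlus_sub by auto
  have "w a = w b \<or> w a = vneg (w b)"
    using posF_eq[OF W_Psi[OF w aP(1)] W_Psi[OF w aP(2)]] e by (simp add: actF_def)
  moreover obtain w' where w': "w' \<in> WF4" "\<forall>x. w' (w x) = x" using W_inv[OF w] by blast
  ultimately have "a = b \<or> a = vneg b" using W_odd[OF w'(1)] by metis
  then show "a = b" using PsiPlus_vneg a b X by auto
qed

lemma actF_self: "w \<in> WF4 \<Longrightarrow> ip4 (actF w x) (actF w x) = ip4 x x"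
  by (simp add: actF_def ip4_posF_self W_ip)

lemma shp_inv: assumes w: "w \<in> WF4" and X: "X \<subseteq> PsiPlus" shows "shp (actFset w X) = shp X"
proof -
  have e: "\<And>c. {y \<in> actFset w X. ip4 y y = c} = actF w ` {x \<in> X. ip4 x x = c}"
    unfolding actFset_def using actF_self[OF w] by auto
  have "\<And>c. card (actF w ` {x \<in> X. ip4 x x = c}) = card {x \<in> X. ip4 x x = c}"
    by (rule card_image, rule inj_on_subset[OF actF_inj[OF w X]]) auto
  then show ?thesis unfolding shp_def nL_def nS_def e by simp
qed

lemma orth_inv: assumes w: "w \<in> WF4" and X: "X \<subseteq> PsiPlus" and o: "orthF X"
  shows "orthF (actFset w X)"
  unfolding orthF_def actFset_def
proof (intro ballI impI)
  fix y1 y2 assume y: "y1 \<in> actF w ` X" "y2 \<in> actF w ` X" "y1 \<noteq> y2"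
  then obtain x1 x2 where x: "x1 \<in> X" "x2 \<in> X" "y1 = actF w x1" "y2 = actF w x2" by blast
  then have "x1 \<noteq> x2" using y by auto
  then have "ip4 x1 x2 = 0" using o x unfolding orthF_def by blast
  then have "ip4 (w x1) (w x2) = 0" using W_ip[OF w] by simp
  then show "ip4 y1 y2 = 0" unfolding x actF_def using ip4_posF[of "w x1" "w x2"] by auto
qed

section \<open>Enumeration of orthogonal sets\<close>

lemma osets_complete: "T \<subseteq> set xs \<Longrightarrow> (\<forall>a\<in>T. \<forall>b\<in>T. a \<noteq> b \<longrightarrow> ipi a b = 0) \<Longrightarrow> \<exists>ys\<in>set (osets xs). set ys = T"
proof (induction xs arbitrary: T rule: osets.induct)
  case 1 then show ?case by auto
next
  case (2 x xs)
  show ?case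
  proof (cases "x \<in> T")
    case False
    then have "T \<subseteq> set xs" using "2.prems"(1) by auto
    then obtain ys where "ys \<in> set (osets xs)" "set ys = T" using "2.IH"(1) "2.prems"(2) by blast
    then show ?thesis by auto
  next
    case True
    have "T - {x} \<subseteq> set (filter (\<lambda>y. ipi x y = 0) xs)" using "2.prems" True by auto
    moreover have "\<forall>a\<in>T - {x}. \<forall>b\<in>T - {x}. a \<noteq> b \<longrightarrow> ipi a b = 0" using "2.prems"(2) by blast
    ultimately obtain ys where "ys \<in> set (osets (filter (\<lambda>y. ipi x y = 0) xs))" "set ys = T - {x}"
      using "2.IH"(2) by blast
    then show ?thesis using True by (intro bexI[of _ "x # ys"]) auto
  qed
qed

lemma to_list: assumes X: "X \<subseteq> PsiPlus" and o: "orthF X"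
  shows "\<exists>ys\<in>set (osets psiP). X = R4 ` set ys"
proof -
  define T where "T = {v \<in> set psiP. R4 v \<in> X}"
  have XT: "X = R4 ` T" using X unfolding T_def PsiPlus_eq by auto
  have "\<forall>a\<in>T. \<forall>b\<in>T. a \<noteq> b \<longrightarrow> ipi a b = 0"
    using o unfolding orthF_def T_def by (auto simp: R4_eq_iff ip4_R4_eq0[symmetric])
  moreover have "T \<subseteq> set psiP" unfolding T_def by auto
  ultimately obtain ys where "ys \<in> set (osets psiP)" "set ys = T" using osets_complete by blast
  then show ?thesis using XT by blast
qed

definition Cimg :: "nat \<times> nat \<Rightarrow> vec set set" where
  "Cimg s = (\<lambda>U. R4 ` U) ` set (map set (cls s))"

lemma class_mem: assumes X: "X \<subseteq> PsiPlus" and o: "orthF X" and s: "shp X \<in> set goods"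
  shows "X \<in> Cimg (shp X)"
proof -
  obtain ys where ys: "ys \<in> set (osets psiP)" "X = R4 ` set ys" using to_list[OF X o] by blast
  have sh: "shp X = shapei ys" using ys(2) shp_R4 by simp
  then have "set ys \<in> set (map set (cls (shapei ys)))" using ck_cls ys(1) s by auto
  then have "R4 ` set ys \<in> (\<lambda>U. R4 ` U) ` set (map set (cls (shapei ys)))" by (rule image_eqI[OF refl])
  then show ?thesis unfolding Cimg_def sh using ys(2) by (simp only:)
qed

lemma adm_shape: assumes a: "admF X" shows "shp X \<in> set goods"
proof -
  have X: "X \<subseteq> PsiPlus" and o: "orthF X" and ad: "admE (preimE X)"
    using a unfolding admF_def orthF_def by auto
  obtain ys where ys: "ys \<in> set (osets psiP)" "X = R4 ` set ys" using to_list[OF X o] by blast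
  obtain i where i: "i < length (osets psiP)" "osets psiP ! i = ys" using ys(1) by (auto simp: in_set_conv_nth)
  have "case wits ! i of None \<Rightarrow> shapei ys \<in> set goods | Some w \<Rightarrow> badw (preimi ys) w"
    using ck_wits i unfolding list_all2_conv_all_nth by auto
  moreover have "admE (E6 ` set (preimi ys))" using ad ys(2) preimE_R4 by simp
  ultimately have "shapei ys \<in> set goods" using admE_bad by (cases "wits ! i") auto
  then show ?thesis using ys(2) shp_R4 by simp
qed

section \<open>Orbits\<close>

lemma act_R4: assumes r: "r \<in> set psiP" and U: "set U \<subseteq> set psiP"
  shows "actFset (refl4 (R4 r)) (R4 ` set U) = R4 ` set (map (posi \<circ> rfi r) U)"
proof -
  have h: "\<And>u. u \<in> set U \<Longrightarrow> posF (refl4 (R4 r) (R4 u)) = R4 (posi (rfi r u))"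
    using U by (auto simp: refl4_R4'[OF r] posF_R4)
  have "actFset (refl4 (R4 r)) (R4 ` set U) = (\<lambda>u. posF (refl4 (R4 r) (R4 u))) ` set U"
    unfolding actFset_def actF_def by (simp add: image_image)
  also have "\<dots> = (\<lambda>u. R4 (posi (rfi r u))) ` set U" using h by (rule image_cong[OF refl])
  also have "\<dots> = R4 ` set (map (posi \<circ> rfi r) U)" by (simp add: image_image)
  finally show ?thesis .
qed

lemma act_psiP: "r \<in> set psiP \<Longrightarrow> u \<in> set psiP \<Longrightarrow> posi (rfi r u) \<in> set psiP"
  using ck_psi_closed ck_posi by blast

lemma orbit_eq:
  assumes R: "set R \<subseteq> set psiP" "orthF (R4 ` set R)"
    and ch: "chainok (\<lambda>r. r \<in> set psiP) (\<lambda>r U. map (posi \<circ> rfi r) U) [R] ch"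
    and sh: "shapei R \<in> set goods" and cl: "cls (shapei R) = R # map fst ch"
  shows "orbitF (R4 ` set R) = Cimg (shapei R)"
proof
  have XP: "R4 ` set R \<subseteq> PsiPlus" using R(1) PsiPlus_eq by auto
  then have XPs: "R4 ` set R \<subseteq> Psi" using PsiPlus_sub by auto
  show "orbitF (R4 ` set R) \<subseteq> Cimg (shapei R)"
  proof
    fix T assume "T \<in> orbitF (R4 ` set R)"
    then obtain w where w: "w \<in> WF4" "T = actFset w (R4 ` set R)" unfolding orbitF_def by blast
    have TP: "T \<subseteq> PsiPlus" using actF_PsiPlus[OF w(1) XPs] w(2) by simp
    have To: "orthF T" using orth_inv[OF w(1) XP R(2)] w(2) by simp
    have Ts: "shp T = shapei R" using shp_inv[OF w(1) XP] w(2) shp_R4 by simp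
    show "T \<in> Cimg (shapei R)" using class_mem[OF TP To] Ts sh by simp
  qed
  show "Cimg (shapei R) \<subseteq> orbitF (R4 ` set R)"
  proof -
    let ?P = "\<lambda>U. set U \<subseteq> set psiP \<and> R4 ` set U \<in> orbitF (R4 ` set R)"
    have K: "\<forall>x\<in>set [R]. ?P x" using R(1) orbit_self[OF XP] by simp
    have step: "\<And>r U. r \<in> set psiP \<Longrightarrow> ?P U \<Longrightarrow> ?P (map (posi \<circ> rfi r) U)"
    proof -
      fix r U assume r: "r \<in> set psiP" and P: "?P U"
      have "set (map (posi \<circ> rfi r) U) \<subseteq> set psiP" using P act_psiP[OF r] by auto
      moreover have "R4 r \<in> Psi" using r R4_in_Psi psiP_sub_psi by auto
      then have "actFset (refl4 (R4 r)) (R4 ` set U) \<in> orbitF (R4 ` set R)"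
        using orbit_closed P XPs by blast
      ultimately show "?P (map (posi \<circ> rfi r) U)" using act_R4[OF r] P by simp
    qed
    have "\<forall>x\<in>set (map fst ch). ?P x" by (rule chainok_P[OF ch K step])
    then show ?thesis unfolding Cimg_def cl using K by auto
  qed
qed


section \<open>Bijection\<close>

lemma sigi_sigi: "sigi (sigi v) = v" by (cases v) simp

lemma ip_ident: "ipi (pEi x) (pEi y) = 2 * (ipEi x y + ipEi x (sigi y))"
  by (cases x; cases y) (simp add: algebra_simps)

lemma PhiPlus_cases: "v \<in> PhiPlus \<Longrightarrow> \<exists>x\<in>set phiP. v = E6 x"
  by (auto simp: PhiPlus_eq)

lemma sig_PhiPlus: assumes v: "v \<in> PhiPlus"
  shows "sigmaE v \<in> PhiPlus" "pE (sigmaE v) = pE v" "sigmaE (sigmaE v) = v"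
proof -
  obtain x where x: "x \<in> set phiP" "v = E6 x" using PhiPlus_cases[OF v] by blast
  show "sigmaE v \<in> PhiPlus" "pE (sigmaE v) = pE v" "sigmaE (sigmaE v) = v"
    using ck_sig x by (auto simp: sigmaE_E6 E6_in_PhiPlus pE_E6 sigi_sigi simp del: pEi.simps sigi.simps)
qed

lemma fiber: assumes v: "v \<in> PhiPlus" and b: "b \<in> PhiPlus" and e: "pE v = pE b"
  shows "v = b \<or> v = sigmaE b"
proof -
  obtain x where x: "x \<in> set phiP" "v = E6 x" using PhiPlus_cases[OF v] by blast
  obtain y where y: "y \<in> set phiP" "b = E6 y" using PhiPlus_cases[OF b] by blast
  have "pEi x = pEi y" using e x y by (simp add: pE_E6 R4_eq_iff del: pEi.simps)
  then have "x = y \<or> x = sigi y" using ck_fiber x y by blast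
  then show ?thesis using x y by (auto simp: sigmaE_E6 simp del: sigi.simps)
qed

lemma ip_fold: "ip4 (pE (E6 x)) (pE (E6 y)) = (ipE (E6 x) (E6 y) + ipE (E6 x) (sigmaE (E6 y))) / 2"
  by (simp add: pE_E6 ip4_R4 ipE_E6 sigmaE_E6 ip_ident del: pEi.simps sigi.simps ipEi.simps ipi.simps)

lemma pE_PsiPlus: "v \<in> PhiPlus \<Longrightarrow> pE v \<in> PsiPlus"
  using ck_pE_into by (auto simp: PhiPlus_eq PsiPlus_eq pE_E6 simp del: pEi.simps)

lemma pE_onto: assumes X: "X \<subseteq> PsiPlus" shows "pE ` preimE X = X"
proof
  show "pE ` preimE X \<subseteq> X" unfolding preimE_def by auto
  show "X \<subseteq> pE ` preimE X"
  proof
    fix x assume x: "x \<in> X"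
    then obtain u where u: "u \<in> set psiP" "x = R4 u" using X by (auto simp: PsiPlus_eq)
    then obtain v where v: "v \<in> set phiP" "pEi v = u" using ck_pE_onto by (auto simp del: pEi.simps)
    have "E6 v \<in> preimE X" using v u x by (simp add: preimE_def E6_in_PhiPlus pE_E6 del: pEi.simps)
    moreover have "pE (E6 v) = x" using v u by (simp add: pE_E6 del: pEi.simps)
    ultimately show "x \<in> pE ` preimE X" by blast
  qed
qed

lemma preimE_sub: "preimE X \<subseteq> PhiPlus" unfolding preimE_def by auto

lemma preimE_sig: "sigmaE ` preimE X = preimE X"
proof
  show "sigmaE ` preimE X \<subseteq> preimE X"
    using sig_PhiPlus unfolding preimE_def by auto
  show "preimE X \<subseteq> sigmaE ` preimE X"
  proof
    fix v assume v: "v \<in> preimE X"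
    then have "sigmaE v \<in> preimE X" using sig_PhiPlus unfolding preimE_def by auto
    moreover have "v \<in> PhiPlus" using v preimE_sub by blast
    then have "v = sigmaE (sigmaE v)" using sig_PhiPlus(3) by metis
    ultimately show "v \<in> sigmaE ` preimE X" by blast
  qed
qed

lemma bij_part: "bij_betw preimE {X. admF X} {B. admE B \<and> sigmaE ` B = B}"
  unfolding bij_betw_def
proof
  show "inj_on preimE {X. admF X}"
  proof (rule inj_onI)
    fix X Y assume "X \<in> {X. admF X}" "Y \<in> {X. admF X}" and e: "preimE X = preimE Y"
    then have "X \<subseteq> PsiPlus" "Y \<subseteq> PsiPlus" unfolding admF_def by auto
    then show "X = Y" using pE_onto e by metis
  qed
  show "preimE ` {X. admF X} = {B. admE B \<and> sigmaE ` B = B}"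
  proof
    show "preimE ` {X. admF X} \<subseteq> {B. admE B \<and> sigmaE ` B = B}"
      using preimE_sig unfolding admF_def by auto
    show "{B. admE B \<and> sigmaE ` B = B} \<subseteq> preimE ` {X. admF X}"
    proof
      fix B assume "B \<in> {B. admE B \<and> sigmaE ` B = B}"
      then have aB: "admE B" and sB: "sigmaE ` B = B" by auto
      have BP: "B \<subseteq> PhiPlus" and Bo: "\<forall>g1\<in>B. \<forall>g2\<in>B. g1 \<noteq> g2 \<longrightarrow> ipE g1 g2 = 0"
        using aB unfolding admE_def by auto
      have sigB: "\<And>b. b \<in> B \<Longrightarrow> sigmaE b \<in> B" using sB by blast
      define X where "X = pE ` B"
      have pre: "preimE X = B"
      proof
        show "B \<subseteq> preimE X" using BP unfolding X_def preimE_def by auto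
        show "preimE X \<subseteq> B"
        proof
          fix v assume "v \<in> preimE X"
          then obtain b where b: "b \<in> B" "v \<in> PhiPlus" "pE v = pE b" unfolding preimE_def X_def by auto
          then have "v = b \<or> v = sigmaE b" using fiber BP by blast
          then show "v \<in> B" using b sigB by auto
        qed
      qed
      have XP: "X \<subseteq> PsiPlus" unfolding X_def using BP pE_PsiPlus by auto
      have Xo: "\<forall>x\<in>X. \<forall>y\<in>X. x \<noteq> y \<longrightarrow> ip4 x y = 0"
      proof (intro ballI impI)
        fix x y assume "x \<in> X" "y \<in> X" "x \<noteq> y"
        then obtain b1 b2 where b: "b1 \<in> B" "b2 \<in> B" "x = pE b1" "y = pE b2" "pE b1 \<noteq> pE b2"
          unfolding X_def by auto
        have s2: "sigmaE b2 \<in> B" "pE (sigmaE b2) = pE b2" using sigB b(2) sig_PhiPlus BP b(2) by auto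
        have "b1 \<noteq> b2" "b1 \<noteq> sigmaE b2" using b(5) s2(2) by auto
        then have z: "ipE b1 b2 = 0" "ipE b1 (sigmaE b2) = 0" using Bo b(1,2) s2(1) by auto
        obtain x1 where x1: "b1 = E6 x1" using PhiPlus_cases BP b(1) by blast
        obtain x2 where x2: "b2 = E6 x2" using PhiPlus_cases BP b(2) by blast
        show "ip4 x y = 0" using ip_fold[of x1 x2] z unfolding b(3,4) x1 x2 by simp
      qed
      have "admF X" unfolding admF_def using XP Xo pre aB by simp
      then show "B \<in> preimE ` {X. admF X}" using pre by blast
    qed
  qed
qed


lemma ck_reps: "list_all (\<lambda>R. set R \<subseteq> set psiP \<and> (\<forall>u\<in>set R. \<forall>v\<in>set R. u \<noteq> v \<longrightarrow> ipi u v = 0))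
   [repI, repII, repIII, repIV, repV, repVI]" by code_simp

lemma orthF_R4: "(\<forall>u\<in>set R. \<forall>v\<in>set R. u \<noteq> v \<longrightarrow> ipi u v = 0) \<Longrightarrow> orthF (R4 ` set R)"
  by (auto simp: orthF_def ip4_R4_eq0 R4_eq_iff)

lemma admF_of: "set R \<subseteq> set psiP \<Longrightarrow> (\<forall>u\<in>set R. \<forall>v\<in>set R. u \<noteq> v \<longrightarrow> ipi u v = 0) \<Longrightarrow>
   admEi (preimi R) \<Longrightarrow> admF (R4 ` set R)"
  unfolding admF_def using orthF_R4[of R] admE_of[of "preimi R"]
  by (auto simp: PsiPlus_eq preimE_R4 orthF_def)

lemma half_R4: "vsc (1/2) (R4 (2, -2, -2, -2)) = R4 (1, -1, -1, -1)"
  by (simp add: fun_eq_iff vsc_def R4.simps)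

lemma eps1: "eps (Suc 0) = R4 (2,0,0,0)" using eps_R4(1) by simp

lemma reprs: "reprI = R4 ` set repI" "reprII = R4 ` set repII" "reprIII = R4 ` set repIII"
  "reprIV = R4 ` set repIV" "reprV = R4 ` set repV" "reprVI = R4 ` set repVI"
  by (simp_all add: reprI_def reprII_def reprIII_def reprIV_def reprV_def reprVI_def
      repI_def repII_def repIII_def repIV_def repV_def repVI_def eps_R4 eps1 vsub_R4 vadd_R4 posF_R4 half_R4
      posi_def psiP_def)

lemma shapes: "shapei repI = (0,0)" "shapei repII = (1,0)" "shapei repIII = (0,1)"
   "shapei repIV = (2,0)" "shapei repV = (2,1)" "shapei repVI = (4,0)"
  using ck_shapes by (simp_all add: goods_def)

lemma goods_mem: "map shapei [repI, repII, repIII, repIV, repV, repVI] = goods" by (rule ck_shapes)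

lemma orb_all: "orbitF reprI = Cimg (0,0)" "orbitF reprII = Cimg (1,0)" "orbitF reprIII = Cimg (0,1)"
  "orbitF reprIV = Cimg (2,0)" "orbitF reprV = Cimg (2,1)" "orbitF reprVI = Cimg (4,0)"
proof -
  have r: "set repI \<subseteq> set psiP \<and> (\<forall>u\<in>set repI. \<forall>v\<in>set repI. u \<noteq> v \<longrightarrow> ipi u v = 0)"
    "set repII \<subseteq> set psiP \<and> (\<forall>u\<in>set repII. \<forall>v\<in>set repII. u \<noteq> v \<longrightarrow> ipi u v = 0)"
    "set repIII \<subseteq> set psiP \<and> (\<forall>u\<in>set repIII. \<forall>v\<in>set repIII. u \<noteq> v \<longrightarrow> ipi u v = 0)"
    "set repIV \<subseteq> set psiP \<and> (\<forall>u\<in>set repIV. \<forall>v\<in>set repIV. u \<noteq> v \<longrightarrow> ipi u v = 0)"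
    "set repV \<subseteq> set psiP \<and> (\<forall>u\<in>set repV. \<forall>v\<in>set repV. u \<noteq> v \<longrightarrow> ipi u v = 0)"
    "set repVI \<subseteq> set psiP \<and> (\<forall>u\<in>set repVI. \<forall>v\<in>set repVI. u \<noteq> v \<longrightarrow> ipi u v = 0)"
    using ck_reps by simp_all
  have g: "(0,0) \<in> set goods" "(1,0) \<in> set goods" "(0,1) \<in> set goods" "(2,0) \<in> set goods"
    "(2,1) \<in> set goods" "(4,0) \<in> set goods" by (simp_all add: goods_def)
  have c: "cls (0,0) = repI # map fst chI" "cls (1,0) = repII # map fst chII"
    "cls (0,1) = repIII # map fst chIII" "cls (2,0) = repIV # map fst chIV"
    "cls (2,1) = repV # map fst chV" "cls (4,0) = repVI # map fst chVI"
    by (simp_all add: cls_def)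
  have "orbitF (R4 ` set repI) = Cimg (shapei repI)"
    by (rule orbit_eq[OF r(1)[THEN conjunct1] orthF_R4[OF r(1)[THEN conjunct2]] ck_chI])
       (simp_all add: shapes goods_def cls_def)
  then show "orbitF reprI = Cimg (0,0)" by (simp add: reprs shapes)
  have "orbitF (R4 ` set repII) = Cimg (shapei repII)"
    by (rule orbit_eq[OF r(2)[THEN conjunct1] orthF_R4[OF r(2)[THEN conjunct2]] ck_chII])
       (simp_all add: shapes goods_def cls_def)
  then show "orbitF reprII = Cimg (1,0)" by (simp add: reprs shapes)
  have "orbitF (R4 ` set repIII) = Cimg (shapei repIII)"
    by (rule orbit_eq[OF r(3)[THEN conjunct1] orthF_R4[OF r(3)[THEN conjunct2]] ck_chIII])
       (simp_all add: shapes goods_def cls_def)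
  then show "orbitF reprIII = Cimg (0,1)" by (simp add: reprs shapes)
  have "orbitF (R4 ` set repIV) = Cimg (shapei repIV)"
    by (rule orbit_eq[OF r(4)[THEN conjunct1] orthF_R4[OF r(4)[THEN conjunct2]] ck_chIV])
       (simp_all add: shapes goods_def cls_def)
  then show "orbitF reprIV = Cimg (2,0)" by (simp add: reprs shapes)
  have "orbitF (R4 ` set repV) = Cimg (shapei repV)"
    by (rule orbit_eq[OF r(5)[THEN conjunct1] orthF_R4[OF r(5)[THEN conjunct2]] ck_chV])
       (simp_all add: shapes goods_def cls_def)
  then show "orbitF reprV = Cimg (2,1)" by (simp add: reprs shapes)
  have "orbitF (R4 ` set repVI) = Cimg (shapei repVI)"
    by (rule orbit_eq[OF r(6)[THEN conjunct1] orthF_R4[OF r(6)[THEN conjunct2]] ck_chVI])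
       (simp_all add: shapes goods_def cls_def)
  then show "orbitF reprVI = Cimg (4,0)" by (simp add: reprs shapes)
qed

lemma adm_reps: "admF reprI" "admF reprII" "admF reprIII" "admF reprIV" "admF reprV" "admF reprVI"
proof -
  have a: "admEi (preimi repI)" "admEi (preimi repII)" "admEi (preimi repIII)" "admEi (preimi repIV)"
     "admEi (preimi repV)" "admEi (preimi repVI)" using ck_adm by simp_all
  have r: "set repI \<subseteq> set psiP \<and> (\<forall>u\<in>set repI. \<forall>v\<in>set repI. u \<noteq> v \<longrightarrow> ipi u v = 0)"
    "set repII \<subseteq> set psiP \<and> (\<forall>u\<in>set repII. \<forall>v\<in>set repII. u \<noteq> v \<longrightarrow> ipi u v = 0)"
    "set repIII \<subseteq> set psiP \<and> (\<forall>u\<in>set repIII. \<forall>v\<in>set repIII. u \<noteq> v \<longrightarrow> ipi u v = 0)"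
    "set repIV \<subseteq> set psiP \<and> (\<forall>u\<in>set repIV. \<forall>v\<in>set repIV. u \<noteq> v \<longrightarrow> ipi u v = 0)"
    "set repV \<subseteq> set psiP \<and> (\<forall>u\<in>set repV. \<forall>v\<in>set repV. u \<noteq> v \<longrightarrow> ipi u v = 0)"
    "set repVI \<subseteq> set psiP \<and> (\<forall>u\<in>set repVI. \<forall>v\<in>set repVI. u \<noteq> v \<longrightarrow> ipi u v = 0)"
    using ck_reps by simp_all
  show "admF reprI" "admF reprII" "admF reprIII" "admF reprIV" "admF reprV" "admF reprVI"
    unfolding reprs
    by (rule admF_of[OF r(1)[THEN conjunct1] r(1)[THEN conjunct2] a(1)],
        rule admF_of[OF r(2)[THEN conjunct1] r(2)[THEN conjunct2] a(2)],
        rule admF_of[OF r(3)[THEN conjunct1] r(3)[THEN conjunct2] a(3)],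
        rule admF_of[OF r(4)[THEN conjunct1] r(4)[THEN conjunct2] a(4)],
        rule admF_of[OF r(5)[THEN conjunct1] r(5)[THEN conjunct2] a(5)],
        rule admF_of[OF r(6)[THEN conjunct1] r(6)[THEN conjunct2] a(6)])
qed

lemma inj_img: "inj f \<Longrightarrow> inj ((`) f)" by (auto simp: inj_def inj_image_eq_iff)

lemma card_Cimg: "card (Cimg s) = card (set (map set (cls s)))"
  unfolding Cimg_def by (rule card_image) (rule inj_on_subset[OF inj_img[OF inj_R4]], simp)

lemma orbits_set: "{orbitF X | X. admF X} =
   {orbitF reprI, orbitF reprII, orbitF reprIII, orbitF reprIV, orbitF reprV, orbitF reprVI}"
proof
  show "{orbitF X | X. admF X} \<subseteq> {orbitF reprI, orbitF reprII, orbitF reprIII, orbitF reprIV, orbitF reprV, orbitF reprVI}"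
  proof
    fix Ob assume "Ob \<in> {orbitF X | X. admF X}"
    then obtain X where X: "admF X" "Ob = orbitF X" by blast
    have XP: "X \<subseteq> PsiPlus" and o: "orthF X" using X(1) unfolding admF_def orthF_def by auto
    have s: "shp X \<in> set goods" using adm_shape[OF X(1)] .
    have m: "X \<in> Cimg (shp X)" using class_mem[OF XP o s] .
    have rP: "reprI \<subseteq> PsiPlus" "reprII \<subseteq> PsiPlus" "reprIII \<subseteq> PsiPlus" "reprIV \<subseteq> PsiPlus"
       "reprV \<subseteq> PsiPlus" "reprVI \<subseteq> PsiPlus" using adm_reps unfolding admF_def by auto
    have "shp X = (0,0) \<or> shp X = (1,0) \<or> shp X = (0,1) \<or> shp X = (2,0) \<or> shp X = (2,1) \<or> shp X = (4,0)"
      using s by (simp add: goods_def)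
    then show "Ob \<in> {orbitF reprI, orbitF reprII, orbitF reprIII, orbitF reprIV, orbitF reprV, orbitF reprVI}"
    proof (elim disjE)
      assume "shp X = (0,0)"
      then have "X \<in> orbitF reprI" using m orb_all(1) by simp
      then have "Ob = orbitF reprI" using orbit_same[OF rP(1)] X(2) by simp
      then show ?thesis by simp
    next
      assume "shp X = (1,0)"
      then have "X \<in> orbitF reprII" using m orb_all(2) by simp
      then have "Ob = orbitF reprII" using orbit_same[OF rP(2)] X(2) by simp
      then show ?thesis by simp
    next
      assume "shp X = (0,1)"
      then have "X \<in> orbitF reprIII" using m orb_all(3) by simp
      then have "Ob = orbitF reprIII" using orbit_same[OF rP(3)] X(2) by simp
      then show ?thesis by simp
    next
      assume "shp X = (2,0)"
      then have "X \<in> orbitF reprIV" using m orb_all(4) by simp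
      then have "Ob = orbitF reprIV" using orbit_same[OF rP(4)] X(2) by simp
      then show ?thesis by simp
    next
      assume "shp X = (2,1)"
      then have "X \<in> orbitF reprV" using m orb_all(5) by simp
      then have "Ob = orbitF reprV" using orbit_same[OF rP(5)] X(2) by simp
      then show ?thesis by simp
    next
      assume "shp X = (4,0)"
      then have "X \<in> orbitF reprVI" using m orb_all(6) by simp
      then have "Ob = orbitF reprVI" using orbit_same[OF rP(6)] X(2) by simp
      then show ?thesis by simp
    qed
  qed
  show "{orbitF reprI, orbitF reprII, orbitF reprIII, orbitF reprIV, orbitF reprV, orbitF reprVI} \<subseteq> {orbitF X | X. admF X}"
    using adm_reps by blast
qed

lemma card6: "card {orbitF reprI, orbitF reprII, orbitF reprIII, orbitF reprIV, orbitF reprV, orbitF reprVI} = 6"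
proof -
  have e: "{orbitF reprI, orbitF reprII, orbitF reprIII, orbitF reprIV, orbitF reprV, orbitF reprVI}
     = ((`) ((`) R4)) ` ((\<lambda>s. set (map set (cls s))) ` set goods)"
    unfolding orb_all Cimg_def by (simp add: goods_def)
  have "card ((\<lambda>s. set (map set (cls s))) ` set goods) = 6" using ck_card6 by simp
  moreover have "inj ((`) ((`) R4))" by (rule inj_img[OF inj_img[OF inj_R4]])
  ultimately show ?thesis unfolding e by (simp add: card_image inj_on_subset)
qed

lemma cards: "card (orbitF reprI) = 1" "card (orbitF reprII) = 12" "card (orbitF reprIII) = 12"
  "card (orbitF reprIV) = 18" "card (orbitF reprV) = 36" "card (orbitF reprVI) = 3"
  using ck_cards unfolding orb_all card_Cimg by (simp_all add: goods_def)

theorem proposition3p2: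
  shows "bij_betw preimE {X. admF X} {B. admE B \<and> sigmaE ` B = B}
    \<and> {orbitF X | X. admF X} =
           {orbitF reprI, orbitF reprII, orbitF reprIII, orbitF reprIV, orbitF reprV, orbitF reprVI}
    \<and> card {orbitF reprI, orbitF reprII, orbitF reprIII, orbitF reprIV, orbitF reprV, orbitF reprVI} = 6
    \<and> admF reprI \<and> admF reprII \<and> admF reprIII \<and> admF reprIV \<and> admF reprV \<and> admF reprVI
    \<and> card (orbitF reprI) = 1 \<and> card (orbitF reprII) = 12 \<and> card (orbitF reprIII) = 12
         \<and> card (orbitF reprIV) = 18 \<and> card (orbitF reprV) = 36 \<and> card (orbitF reprVI) = 3"
  using bij_part orbits_set card6 adm_reps cards by blast


end
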